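(* Let $\xi_t$ ($|t|<T$) be a perturbed Delaunay potential on $D(0,\varepsilon)$ and $\Phi_t$ a family of solutions of $d\Phi_t=\Phi_t\xi_t$ on the universal cover of $D^*(0,\varepsilon)$, depending continuously on $(t,z,\lambda)$, solving the Monodromy Problem, and such that $\Phi_0(1,\cdot)$ is independent of $\lambda$. Let $H=\frac1{\sqrt2}\begin{pmatrix}1&1\\-1&1\end{pmatrix}$ and $Q=\mathrm{Uni}(\Phi_0(1)H)$. Then there exist a gauge $G(z)$ and a change of variable $h(z)$ with $h(0)=0$ such that $\widetilde\xi_t=(h^*\xi_t)\cdot G$ is a perturbed Delaunay potential (with residue $A_t$ at $z=0$) and $\widetilde\Phi_t=(h^*\Phi_t)G$ satisfies $\widetilde\Phi_0(1,\lambda)=QH^{-1}\in\Lambda SU(2)$.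
   Context: For $t\le\frac1{16}$ let $A_t(\lambda)=\begin{pmatrix}0&\lambda^{-1}r+s\\\lambda r+s&0\end{pmatrix}$ with $r+s=\frac12$, $rs=t$, $r<s$. Let $\mathbb A_\rho=\{1/\rho<|\lambda|<\rho\}$, $\rho>1$. A perturbed Delaunay potential is a family of DPW potentials $\xi_t(z,\lambda)=A_t(\lambda)\frac{dz}{z}+R_t(z,\lambda)dz$ with $R_t$ of class $C^2$ in $(t,z,\lambda)\in(-T,T)\times D(0,\varepsilon)\times\mathbb A_\rho$ for some $T,\varepsilon>0$ and $R_0=0$. A gauge is a map $G(z,\lambda)$ holomorphic in $z$ and in $\lambda$ on a disk $|\lambda|<\rho'$, $\rho'>1$, with values in $SL(2,\mathbb C)$ and $G(z,0)$ upper triangular; its action on a potential is $\xi\cdot G=G^{-1}\xi G+G^{-1}dG$. $h^*$ denotes pull-back by $h$. The Monodromy Problem: the monodromy $\mathcal M$ of $\Phi_t$ around the puncture satisfies $\mathcal M\in\Lambda SU(2)$, $\mathcal M(1)=\pm I_2$, $\partial_\lambda\mathcal M(1)=0$. $\mathrm{Uni}(\Phi)$ denotes the unitary factor $F\in\Lambda SU(2)$ of the Iwasawa decomposition $\Phi=FB$, $B$ holomorphic on the unit disk with $B(0)$ upper triangular with positive diagonal (for a constant matrix this is the QR decomposition, so $Q\in SU(2)$). *)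

theory Defs
  imports "HOL-Analysis.Analysis"
begin

type_synonym cmat = "complex^2^2"

definition mk2 :: "complex \<Rightarrow> complex \<Rightarrow> complex \<Rightarrow> complex \<Rightarrow> cmat" where
  "mk2 a b c d = vector [vector [a, b], vector [c, d]]"

definition msc :: "complex \<Rightarrow> cmat \<Rightarrow> cmat" where
  "msc c A = (\<chi> i j. c * A $ i $ j)"

definition conj_transpose :: "cmat \<Rightarrow> cmat" where
  "conj_transpose A = (\<chi> i j. cnj (A $ j $ i))"

definition SU2 :: "cmat set" where
  "SU2 = {A. A ** conj_transpose A = mat 1 \<and> det A = 1}"

definition mholo :: "(complex \<Rightarrow> cmat) \<Rightarrow> complex set \<Rightarrow> bool" where
  "mholo f S \<longleftrightarrow> (\<forall>i j. (\<lambda>x. f x $ i $ j) holomorphic_on S)"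

definition mhas_deriv :: "(complex \<Rightarrow> cmat) \<Rightarrow> cmat \<Rightarrow> complex \<Rightarrow> bool" where
  "mhas_deriv f D x \<longleftrightarrow> (\<forall>i j. ((\<lambda>y. f y $ i $ j) has_field_derivative (D $ i $ j)) (at x))"

definition C2_on :: "('a::real_normed_vector \<Rightarrow> 'b::real_normed_vector) \<Rightarrow> 'a set \<Rightarrow> bool" where
  "C2_on f U \<longleftrightarrow> (\<exists>D1 D2.
      (\<forall>x\<in>U. (f has_derivative blinfun_apply (D1 x)) (at x)) \<and>
      (\<forall>x\<in>U. (D1 has_derivative blinfun_apply (D2 x)) (at x)) \<and>
      continuous_on U D2)"

definition annulus :: "real \<Rightarrow> complex set" where
  "annulus \<rho> = {l. 1 / \<rho> < cmod l \<and> cmod l < \<rho>}"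

text \<open>Log coordinate w (z = exp w) on the universal cover of D*(0,eps).\<close>
definition logdisk :: "real \<Rightarrow> complex set" where
  "logdisk \<epsilon> = {w. Re w < ln \<epsilon>}"

text \<open>r < s with r + s = 1/2, r s = t.\<close>
definition rD :: "real \<Rightarrow> real" where "rD t = (1 - sqrt (1 - 16 * t)) / 4"
definition sD :: "real \<Rightarrow> real" where "sD t = (1 + sqrt (1 - 16 * t)) / 4"

definition DelA :: "real \<Rightarrow> complex \<Rightarrow> cmat" where
  "DelA t l = mk2 0 (inverse l * of_real (rD t) + of_real (sD t))
                   (l * of_real (rD t) + of_real (sD t)) 0"

text \<open>DPW potential xi(z,l) dz (coefficient of dz) on Omega, loops on the annulus.\<close>
definition DPW_pot :: "(complex \<Rightarrow> complex \<Rightarrow> cmat) \<Rightarrow> complex set \<Rightarrow> real \<Rightarrow> bool" where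
  "DPW_pot \<xi> \<Omega> \<rho> \<longleftrightarrow>
     (\<forall>l\<in>annulus \<rho>. mholo (\<lambda>z. \<xi> z l) \<Omega>) \<and>
     (\<forall>z\<in>\<Omega>. mholo (\<xi> z) (annulus \<rho>)) \<and>
     (\<forall>z\<in>\<Omega>. \<forall>l\<in>annulus \<rho>. \<xi> z l $ 1 $ 1 + \<xi> z l $ 2 $ 2 = 0) \<and>
     (\<forall>z\<in>\<Omega>. \<exists>F. mholo F (ball 0 \<rho>) \<and> (\<forall>l\<in>annulus \<rho>. F l = msc l (\<xi> z l)) \<and>
         F 0 $ 1 $ 1 = 0 \<and> F 0 $ 2 $ 1 = 0 \<and> F 0 $ 2 $ 2 = 0)"

definition pert_delaunay :: "(real \<Rightarrow> complex \<Rightarrow> complex \<Rightarrow> cmat) \<Rightarrow> real \<Rightarrow> real \<Rightarrow> real \<Rightarrow> bool" where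
  "pert_delaunay \<xi> T \<epsilon> \<rho> \<longleftrightarrow> 0 < T \<and> T \<le> 1/16 \<and> 0 < \<epsilon> \<and> 1 < \<rho> \<and>
     (\<exists>R. C2_on (\<lambda>(t, z, l). R t z l) ({-T<..<T} \<times> ball 0 \<epsilon> \<times> annulus \<rho>) \<and>
          (\<forall>z\<in>ball 0 \<epsilon>. \<forall>l\<in>annulus \<rho>. R 0 z l = 0) \<and>
          (\<forall>t\<in>{-T<..<T}. \<forall>z\<in>ball 0 \<epsilon> - {0}. \<forall>l\<in>annulus \<rho>.
              \<xi> t z l = msc (1 / z) (DelA t l) + R t z l)) \<and>
     (\<forall>t\<in>{-T<..<T}. DPW_pot (\<xi> t) (ball 0 \<epsilon> - {0}) \<rho>)"

text \<open>Family of solutions of d Phi_t = Phi_t xi_t on the universal cover (log coordinate),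
  with values in Lambda SL(2,C)_rho, continuous in (t,w,l).\<close>
definition sol_family :: "(real \<Rightarrow> complex \<Rightarrow> complex \<Rightarrow> cmat) \<Rightarrow> (real \<Rightarrow> complex \<Rightarrow> complex \<Rightarrow> cmat)
     \<Rightarrow> real \<Rightarrow> real \<Rightarrow> real \<Rightarrow> bool" where
  "sol_family \<xi> \<Phi> T \<epsilon> \<rho> \<longleftrightarrow>
     continuous_on ({-T<..<T} \<times> logdisk \<epsilon> \<times> annulus \<rho>) (\<lambda>(t, w, l). \<Phi> t w l) \<and>
     (\<forall>t\<in>{-T<..<T}. \<forall>l\<in>annulus \<rho>. \<forall>w\<in>logdisk \<epsilon>.
         mhas_deriv (\<lambda>w. \<Phi> t w l) (\<Phi> t w l ** msc (exp w) (\<xi> t (exp w) l)) w) \<and>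
     (\<forall>t\<in>{-T<..<T}. \<forall>w\<in>logdisk \<epsilon>. \<forall>l\<in>annulus \<rho>. det (\<Phi> t w l) = 1) \<and>
     (\<forall>t\<in>{-T<..<T}. \<forall>w\<in>logdisk \<epsilon>. mholo (\<Phi> t w) (annulus \<rho>))"

definition monodromy_problem :: "(complex \<Rightarrow> complex \<Rightarrow> cmat) \<Rightarrow> real \<Rightarrow> real \<Rightarrow> bool" where
  "monodromy_problem \<Phi>t \<epsilon> \<rho> \<longleftrightarrow> (\<exists>M :: complex \<Rightarrow> cmat.
     (\<forall>l\<in>annulus \<rho>. \<forall>w\<in>logdisk \<epsilon>. \<Phi>t (w + 2 * of_real pi * \<i>) l = M l ** \<Phi>t w l) \<and>
     (\<forall>l. cmod l = 1 \<longrightarrow> M l \<in> SU2) \<and>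
     (M 1 = mat 1 \<or> M 1 = - mat 1) \<and>
     (\<forall>i j. ((\<lambda>l. M l $ i $ j) has_field_derivative 0) (at 1)))"

text \<open>Value at the point z = 1 (w = 0) of the analytic continuation of a solution
  of d Phi = Phi A_0 dz/z (the t = 0 potential), as a function of l.\<close>
definition value_at_one :: "(complex \<Rightarrow> complex \<Rightarrow> cmat) \<Rightarrow> complex set \<Rightarrow> real \<Rightarrow> (complex \<Rightarrow> cmat) \<Rightarrow> bool" where
  "value_at_one \<Phi>0 L \<rho> C \<longleftrightarrow> (\<exists>\<Psi> :: complex \<Rightarrow> complex \<Rightarrow> cmat. \<forall>l\<in>annulus \<rho>.
      (\<forall>w. mhas_deriv (\<lambda>w. \<Psi> w l) (\<Psi> w l ** DelA 0 l) w) \<and>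
      (\<forall>w\<in>L. \<Psi> w l = \<Phi>0 w l) \<and> \<Psi> 0 l = C l)"

text \<open>Unitary factor of the Iwasawa (= QR) decomposition of a constant matrix.\<close>
definition Uni_const :: "cmat \<Rightarrow> cmat" where
  "Uni_const X = (THE Q. Q \<in> SU2 \<and> (\<exists>B. B $ 2 $ 1 = 0 \<and>
      Im (B $ 1 $ 1) = 0 \<and> 0 < Re (B $ 1 $ 1) \<and> Im (B $ 2 $ 2) = 0 \<and> 0 < Re (B $ 2 $ 2) \<and>
      X = Q ** B))"

definition Hmat :: cmat where
  "Hmat = msc (1 / of_real (sqrt 2)) (mk2 1 1 (-1) 1)"

definition change_of_var :: "(complex \<Rightarrow> complex) \<Rightarrow> real \<Rightarrow> real \<Rightarrow> bool" where
  "change_of_var h \<epsilon>' \<epsilon> \<longleftrightarrow> h holomorphic_on ball 0 \<epsilon>' \<and> inj_on h (ball 0 \<epsilon>') \<and>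
      h ` ball 0 \<epsilon>' \<subseteq> ball 0 \<epsilon> \<and> h 0 = 0"

definition is_lift :: "(complex \<Rightarrow> complex) \<Rightarrow> (complex \<Rightarrow> complex) \<Rightarrow> real \<Rightarrow> real \<Rightarrow> bool" where
  "is_lift hl h \<epsilon>' \<epsilon> \<longleftrightarrow> hl holomorphic_on logdisk \<epsilon>' \<and> hl ` logdisk \<epsilon>' \<subseteq> logdisk \<epsilon> \<and>
      (\<forall>w\<in>logdisk \<epsilon>'. exp (hl w) = h (exp w))"

definition is_gauge :: "(complex \<Rightarrow> complex \<Rightarrow> cmat) \<Rightarrow> real \<Rightarrow> real \<Rightarrow> bool" where
  "is_gauge G \<epsilon>' \<rho>' \<longleftrightarrow> 1 < \<rho>' \<and>
     (\<forall>l\<in>ball 0 \<rho>'. mholo (\<lambda>z. G z l) (ball 0 \<epsilon>')) \<and>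
     (\<forall>z\<in>ball 0 \<epsilon>'. mholo (G z) (ball 0 \<rho>')) \<and>
     (\<forall>z\<in>ball 0 \<epsilon>'. \<forall>l\<in>ball 0 \<rho>'. det (G z l) = 1) \<and>
     (\<forall>z\<in>ball 0 \<epsilon>'. G z 0 $ 2 $ 1 = 0)"

definition pullback :: "(complex \<Rightarrow> complex) \<Rightarrow> (complex \<Rightarrow> complex \<Rightarrow> cmat) \<Rightarrow> complex \<Rightarrow> complex \<Rightarrow> cmat" where
  "pullback h \<xi> z l = msc (deriv h z) (\<xi> (h z) l)"

definition gauge_act :: "(complex \<Rightarrow> complex \<Rightarrow> cmat) \<Rightarrow> (complex \<Rightarrow> complex \<Rightarrow> cmat) \<Rightarrow> complex \<Rightarrow> complex \<Rightarrow> cmat" where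
  "gauge_act \<xi> G z l = matrix_inv (G z l) ** \<xi> z l ** G z l
      + matrix_inv (G z l) ** (\<chi> i j. deriv (\<lambda>y. G y l $ i $ j) z)"

end

theory Submission
  imports Defs "HOL-Complex_Analysis.Cauchy_Integral_Formula"
begin


lemma C2_compose:
  assumes g: "C2_on g U" and f: "C2_on f V" and U: "open U" and V: "open V" and gUV: "g ` U \<subseteq> V"
  shows "C2_on (\<lambda>x. f (g x)) U"
proof -
  from g obtain Dg1 Dg2 where g1: "\<forall>x\<in>U. (g has_derivative blinfun_apply (Dg1 x)) (at x)"
      and g2: "\<forall>x\<in>U. (Dg1 has_derivative blinfun_apply (Dg2 x)) (at x)" and g3: "continuous_on U Dg2"
    unfolding C2_on_def by blast
  from f obtain Df1 Df2 where f1: "\<forall>x\<in>V. (f has_derivative blinfun_apply (Df1 x)) (at x)"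
      and f2: "\<forall>x\<in>V. (Df1 has_derivative blinfun_apply (Df2 x)) (at x)" and f3: "continuous_on V Df2"
    unfolding C2_on_def by blast
  define D1 where "D1 x = Df1 (g x) o\<^sub>L Dg1 x" for x
  define D2 where "D2 x = (bounded_bilinear.prod_right blinfun_compose (Df1 (g x)) o\<^sub>L Dg2 x)
      + (bounded_bilinear.prod_left blinfun_compose (Dg1 x) o\<^sub>L (Df2 (g x) o\<^sub>L Dg1 x))" for x
  note bb = bounded_bilinear_blinfun_compose
  have gx: "g x \<in> V" if "x \<in> U" for x using gUV that by blast
  have d1: "((\<lambda>x. f (g x)) has_derivative blinfun_apply (D1 x)) (at x)" if x: "x \<in> U" for x
    using has_derivative_compose[OF g1[rule_format, OF x] f1[rule_format, OF gx[OF x]]]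
    by (simp add: D1_def blinfun_compose.rep_eq comp_def)
  have dfg: "((\<lambda>x. Df1 (g x)) has_derivative (\<lambda>v. Df2 (g x) (Dg1 x v))) (at x)" if x: "x \<in> U" for x
    using has_derivative_compose[OF g1[rule_format, OF x] f2[rule_format, OF gx[OF x]]] by simp
  have d2: "(D1 has_derivative blinfun_apply (D2 x)) (at x)" if x: "x \<in> U" for x
  proof -
    have "((\<lambda>x. Df1 (g x) o\<^sub>L Dg1 x) has_derivative
        (\<lambda>h. (Df1 (g x) o\<^sub>L Dg2 x h) + (Df2 (g x) (Dg1 x h) o\<^sub>L Dg1 x))) (at x)"
      using bounded_bilinear.FDERIV[OF bb dfg[OF x] g2[rule_format, OF x]] .
    moreover have "blinfun_apply (D2 x) = (\<lambda>h. (Df1 (g x) o\<^sub>L Dg2 x h) + (Df2 (g x) (Dg1 x h) o\<^sub>L Dg1 x))"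
      by (simp add: D2_def bounded_bilinear.prod_right.rep_eq[OF bb] bounded_bilinear.prod_left.rep_eq[OF bb]
          plus_blinfun.rep_eq fun_eq_iff)
    ultimately show ?thesis unfolding D1_def[abs_def] by simp
  qed
  have cDg1: "continuous_on U Dg1"
    using g2 by (meson continuous_at_imp_continuous_on has_derivative_continuous)
  have cDf1: "continuous_on V Df1"
    using f2 by (meson continuous_at_imp_continuous_on has_derivative_continuous)
  have cg: "continuous_on U g"
    using g1 by (meson continuous_at_imp_continuous_on has_derivative_continuous)
  have c1: "continuous_on U (\<lambda>x. Df1 (g x))" using continuous_on_compose2[OF cDf1 cg gUV] .
  have c2: "continuous_on U (\<lambda>x. Df2 (g x))" using continuous_on_compose2[OF f3 cg gUV] .
  have c3: "continuous_on U D2"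
    unfolding D2_def
    by (intro continuous_on_add bounded_bilinear.continuous_on[OF bb]
        bounded_linear.continuous_on[OF bounded_bilinear.bounded_linear_prod_right[OF bb]]
        bounded_linear.continuous_on[OF bounded_bilinear.bounded_linear_prod_left[OF bb]]
        c1 c2 cDg1 g3)
  show ?thesis unfolding C2_on_def using d1 d2 c3 by blast
qed

lemma C2_onI:
  "(\<forall>x\<in>U. (f has_derivative blinfun_apply (Da x)) (at x)) \<Longrightarrow>
   (\<forall>x\<in>U. (Da has_derivative blinfun_apply (Db x)) (at x)) \<Longrightarrow> continuous_on U Db \<Longrightarrow> C2_on f U"
  unfolding C2_on_def by blast

lemma C2_mono: "C2_on f V \<Longrightarrow> U \<subseteq> V \<Longrightarrow> C2_on f U"
  unfolding C2_on_def by (meson continuous_on_subset subsetD)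

lemma C2_linear: assumes "bounded_linear L" shows "C2_on L U"
  apply (rule C2_onI[where Da="\<lambda>_. Blinfun L" and Db="\<lambda>_. 0"])
  using assms by (auto simp: bounded_linear_Blinfun_apply bounded_linear_imp_has_derivative
      zero_blinfun.rep_eq intro!: continuous_on_const has_derivative_const)

lemma C2_const: "C2_on (\<lambda>x. c) U"
  apply (rule C2_onI[where Da="\<lambda>_. 0" and Db="\<lambda>_. 0"])
  by (auto simp: zero_blinfun.rep_eq intro!: continuous_on_const has_derivative_const)

lemma C2_add: assumes "C2_on f U" "C2_on g U" shows "C2_on (\<lambda>x. f x + g x) U"
proof -
  from assms(1) obtain F1 F2 where f: "\<forall>x\<in>U. (f has_derivative blinfun_apply (F1 x)) (at x)"
      "\<forall>x\<in>U. (F1 has_derivative blinfun_apply (F2 x)) (at x)" "continuous_on U F2"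
    unfolding C2_on_def by blast
  from assms(2) obtain G1 G2 where g: "\<forall>x\<in>U. (g has_derivative blinfun_apply (G1 x)) (at x)"
      "\<forall>x\<in>U. (G1 has_derivative blinfun_apply (G2 x)) (at x)" "continuous_on U G2"
    unfolding C2_on_def by blast
  show ?thesis
    apply (rule C2_onI[where Da="\<lambda>x. F1 x + G1 x" and Db="\<lambda>x. F2 x + G2 x"])
    using f g by (auto simp: plus_blinfun.rep_eq intro!: has_derivative_add continuous_on_add)
qed

lemma C2_lin_comp: "bounded_linear L \<Longrightarrow> C2_on f U \<Longrightarrow> open U \<Longrightarrow> C2_on (\<lambda>x. L (f x)) U"
  using C2_compose[of f U L UNIV] C2_linear by auto

lemma C2_pair: assumes "C2_on f U" "C2_on g U" "open U" shows "C2_on (\<lambda>x. (f x, g x)) U"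
proof -
  have "C2_on (\<lambda>x. (f x, 0)) U"
    by (rule C2_lin_comp[OF _ assms(1,3)]) (intro bounded_linear_Pair bounded_linear_ident bounded_linear_zero)
  moreover have "C2_on (\<lambda>x. (0, g x)) U"
    by (rule C2_lin_comp[OF _ assms(2,3)]) (intro bounded_linear_Pair bounded_linear_ident bounded_linear_zero)
  ultimately show ?thesis using C2_add by fastforce
qed

lemma C2_bilin: assumes bb: "bounded_bilinear b" shows "C2_on (\<lambda>p. b (fst p) (snd p)) U"
proof -
  define L where "L p = (bounded_bilinear.prod_left b (snd p) o\<^sub>L fst_blinfun)
     + (bounded_bilinear.prod_right b (fst p) o\<^sub>L snd_blinfun)" for p
  have L: "bounded_linear L"
    unfolding L_def
    by (intro bounded_linear_add bounded_linear_compose[OF bounded_bilinear.bounded_linear_left[OF bounded_bilinear_blinfun_compose]]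
       bounded_linear_compose[OF bounded_bilinear.bounded_linear_prod_left[OF bb]]
       bounded_linear_compose[OF bounded_bilinear.bounded_linear_prod_right[OF bb]] bounded_linear_fst bounded_linear_snd)
  have d: "((\<lambda>p. b (fst p) (snd p)) has_derivative blinfun_apply (L p)) (at p)" for p
  proof -
    have "((\<lambda>p. b (fst p) (snd p)) has_derivative (\<lambda>q. b (fst p) (snd q) + b (fst q) (snd p))) (at p)"
      by (rule bounded_bilinear.FDERIV[OF bb])
        (auto intro: bounded_linear_imp_has_derivative bounded_linear_fst bounded_linear_snd)
    moreover have "blinfun_apply (L p) = (\<lambda>q. b (fst p) (snd q) + b (fst q) (snd p))"
      by (auto simp: L_def fun_eq_iff plus_blinfun.rep_eq bounded_bilinear.prod_left.rep_eq[OF bb]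
          bounded_bilinear.prod_right.rep_eq[OF bb])
    ultimately show ?thesis by simp
  qed
  show ?thesis
    apply (rule C2_onI[where Da=L and Db="\<lambda>_. Blinfun L"])
    using d L by (auto simp: bounded_linear_Blinfun_apply bounded_linear_imp_has_derivative intro!: continuous_on_const)
qed

lemma C2_bilinear: "bounded_bilinear b \<Longrightarrow> C2_on f U \<Longrightarrow> C2_on g U \<Longrightarrow> open U \<Longrightarrow> C2_on (\<lambda>x. b (f x) (g x)) U"
  using C2_compose[OF C2_pair C2_bilin, of f U g b UNIV] by auto

lemma C2_field:
  fixes f :: "'a::real_normed_field \<Rightarrow> 'a"
  assumes "\<forall>x\<in>S. (f has_field_derivative fa x) (at x)" "\<forall>x\<in>S. (fa has_field_derivative fb x) (at x)"
    "continuous_on S fb"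
  shows "C2_on f S"
proof (rule C2_onI[where Da="\<lambda>x. blinfun_mult_right (fa x)"
      and Db="\<lambda>x. Blinfun blinfun_mult_right o\<^sub>L blinfun_mult_right (fb x)"])
  show "\<forall>x\<in>S. (f has_derivative blinfun_apply (blinfun_mult_right (fa x))) (at x)"
    using assms(1) by (simp add: has_field_derivative_def blinfun_mult_right.rep_eq)
  show "\<forall>x\<in>S. ((\<lambda>x. blinfun_mult_right (fa x)) has_derivative
      blinfun_apply (Blinfun blinfun_mult_right o\<^sub>L blinfun_mult_right (fb x))) (at x)"
  proof
    fix x assume "x \<in> S"
    then have "(fa has_derivative (*) (fb x)) (at x)" using assms(2) by (simp add: has_field_derivative_def)
    from bounded_linear.has_derivative[OF bounded_linear_blinfun_mult_right this]
    show "((\<lambda>x. blinfun_mult_right (fa x)) has_derivative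
      blinfun_apply (Blinfun blinfun_mult_right o\<^sub>L blinfun_mult_right (fb x))) (at x)"
      by (simp add: blinfun_compose.rep_eq comp_def bounded_linear_Blinfun_apply[OF bounded_linear_blinfun_mult_right])
  qed
  show "continuous_on S (\<lambda>x. Blinfun blinfun_mult_right o\<^sub>L blinfun_mult_right (fb x))"
    by (intro bounded_bilinear.continuous_on[OF bounded_bilinear_blinfun_compose] continuous_on_const
        bounded_linear.continuous_on[OF bounded_linear_blinfun_mult_right] assms(3))
qed

lemma C2_holo:
  fixes f :: "complex \<Rightarrow> complex"
  assumes "f holomorphic_on S" "open S" shows "C2_on f S"
proof (rule C2_field[where fa="deriv f" and fb="deriv (deriv f)"])
  have h: "deriv f holomorphic_on S" using holomorphic_deriv assms by blast
  show "\<forall>x\<in>S. (f has_field_derivative deriv f x) (at x)" using assms holomorphic_derivI by blast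
  show "\<forall>x\<in>S. (deriv f has_field_derivative deriv (deriv f) x) (at x)" using h assms holomorphic_derivI by blast
  show "continuous_on S (deriv (deriv f))"
    using holomorphic_deriv[OF h assms(2)] holomorphic_on_imp_continuous_on by blast
qed



lemma mk2_nth[simp]: "mk2 a b c d $ 1 $ 1 = a" "mk2 a b c d $ 1 $ 2 = b"
   "mk2 a b c d $ 2 $ 1 = c" "mk2 a b c d $ 2 $ 2 = d"
  by (simp_all add: mk2_def)

lemma cmat_eqI: "(A::cmat) $ 1 $ 1 = B $ 1 $ 1 \<Longrightarrow> A $ 1 $ 2 = B $ 1 $ 2 \<Longrightarrow>
   A $ 2 $ 1 = B $ 2 $ 1 \<Longrightarrow> A $ 2 $ 2 = B $ 2 $ 2 \<Longrightarrow> A = B"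
  by (simp add: vec_eq_iff forall_2)

lemma cmat_mk2: "(A::cmat) = mk2 (A$1$1) (A$1$2) (A$2$1) (A$2$2)"
  by (rule cmat_eqI) simp_all

lemma mk2_eq_iff: "mk2 a b c d = mk2 a' b' c' d' \<longleftrightarrow> a = a' \<and> b = b' \<and> c = c' \<and> d = d'"
  by (metis mk2_nth)

lemma mk2_mult: "mk2 a b c d ** mk2 e f g h = mk2 (a*e+b*g) (a*f+b*h) (c*e+d*g) (c*f+d*h)"
  by (rule cmat_eqI) (simp_all add: matrix_matrix_mult_def sum_2)

lemma mk2_add: "mk2 a b c d + mk2 e f g h = mk2 (a+e) (b+f) (c+g) (d+h)"
  by (rule cmat_eqI) simp_all

lemma mk2_msc: "msc k (mk2 a b c d) = mk2 (k*a) (k*b) (k*c) (k*d)"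
  by (rule cmat_eqI) (simp_all add: msc_def)

lemma mk2_det: "det (mk2 a b c d) = a*d - b*c"
  by (simp add: det_2)

lemma mk2_mat1: "mat 1 = mk2 1 0 0 1"
  by (rule cmat_eqI) (simp_all add: mat_def)

lemma mk2_zero: "0 = mk2 0 0 0 0"
  by (rule cmat_eqI) simp_all

lemma mk2_neg: "- mk2 a b c d = mk2 (-a) (-b) (-c) (-d)"
  by (rule cmat_eqI) simp_all

lemma mk2_ct: "conj_transpose (mk2 a b c d) = mk2 (cnj a) (cnj c) (cnj b) (cnj d)"
  by (rule cmat_eqI) (simp_all add: conj_transpose_def)

lemma matrix_inv_eq:
  fixes A B :: "'a::comm_ring_1^'n^'n"
  assumes "A ** B = mat 1" "B ** A = mat 1"
  shows "matrix_inv A = B"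
proof -
  have ex: "\<exists>A'. A ** A' = mat 1 \<and> A' ** A = mat 1" using assms by blast
  have "A ** matrix_inv A = mat 1 \<and> matrix_inv A ** A = mat 1"
    unfolding matrix_inv_def by (rule someI_ex[OF ex])
  then have "matrix_inv A = matrix_inv A ** (A ** B)" using assms by simp
  also have "\<dots> = B" using \<open>_ \<and> _\<close> by (simp add: matrix_mul_assoc)
  finally show ?thesis .
qed

lemma matrix_inv_mk2: "a*d - b*c = 1 \<Longrightarrow> matrix_inv (mk2 a b c d) = mk2 d (-b) (-c) a"
  by (rule matrix_inv_eq) (simp_all add: mk2_mult mk2_mat1 algebra_simps)

lemma msc_bilinear: "bounded_bilinear msc"
proof (rule bounded_bilinear.intro)
  show "msc (a + a') b = msc a b + msc a' b" for a a' b
    by (simp add: msc_def vec_eq_iff algebra_simps)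
  show "msc a (b + b') = msc a b + msc a b'" for a b b'
    by (simp add: msc_def vec_eq_iff algebra_simps)
  show "msc (r *\<^sub>R a) b = r *\<^sub>R msc a b" for r a b
    by (simp add: msc_def vec_eq_iff)
  show "msc a (r *\<^sub>R b) = r *\<^sub>R msc a b" for r a b
    by (simp add: msc_def vec_eq_iff)
  show "\<exists>K. \<forall>a b. norm (msc a b) \<le> norm a * norm b * K"
  proof (intro exI allI)
    fix a b
    have l1: "norm (v::complex^2) \<le> (\<Sum>i\<in>UNIV. norm (v $ i))" for v
      unfolding norm_vec_def by (rule L2_set_le_sum) simp
    have l2: "norm (v::cmat) \<le> (\<Sum>i\<in>UNIV. norm (v $ i))" for v
      unfolding norm_vec_def by (rule L2_set_le_sum) simp
    have "norm (msc a b) \<le> (\<Sum>i\<in>UNIV. norm (msc a b $ i))" by (rule l2)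
    also have "\<dots> \<le> (\<Sum>i\<in>UNIV. \<Sum>j\<in>UNIV. norm (msc a b $ i $ j))"
      by (intro sum_mono l1)
    also have "\<dots> \<le> (\<Sum>i\<in>(UNIV::2 set). \<Sum>j\<in>(UNIV::2 set). norm a * norm b)"
    proof (intro sum_mono)
      fix i j
      have "norm (b $ i $ j) \<le> norm (b $ i)" by (rule Finite_Cartesian_Product.norm_nth_le)
      also have "\<dots> \<le> norm b" by (rule Finite_Cartesian_Product.norm_nth_le)
      finally show "norm (msc a b $ i $ j) \<le> norm a * norm b"
        by (simp add: msc_def norm_mult mult_left_mono)
    qed
    also have "\<dots> = norm a * norm b * 4" by (simp add: sum_2)
    finally show "norm (msc a b) \<le> norm a * norm b * 4" .
  qed
qed



definition Cj :: "complex \<Rightarrow> cmat \<Rightarrow> cmat" where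
 "Cj s M = mk2 (M$1$1 - s*M$2$1) ((s*M$1$1 + M$1$2 - s^2*M$2$1 - s*M$2$2)/(1+s))
     ((1+s)*M$2$1) (s*M$2$1 + M$2$2)"

definition Nm :: "complex \<Rightarrow> complex \<Rightarrow> cmat" where
 "Nm x z = mk2 (x/(2*(1+x*z))) (x/(1+x*z)) 0 (-x/(2*(1+x*z)))"

definition Gm :: "complex \<Rightarrow> complex \<Rightarrow> cmat" where
 "Gm x z = mk2 (csqrt(1+x*z)) (csqrt(1+x*z) - 1/csqrt(1+x*z)) 0 (1/csqrt(1+x*z))"

definition hf :: "complex \<Rightarrow> complex \<Rightarrow> complex \<Rightarrow> complex" where
 "hf c x z = c*z/(1+x*z)"

lemma conj_alg:
  assumes a: "a \<noteq> 0" and s: "a^2 = 1 + s"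
  shows "mk2 (1/a) (-(a-1/a)) 0 a ** M ** mk2 a (a-1/a) 0 (1/a) = Cj s M"
proof -
    have s': "s = a^2 - 1" using s by simp
    show ?thesis
    apply (subst cmat_mk2[of M])
    apply (simp add: mk2_mult Cj_def mk2_eq_iff s')
    using a by (auto simp: field_simps power2_eq_square)
qed

lemma Nm_alg:
  assumes a: "a \<noteq> 0" and s: "a^2 = 1 + x*z" and ad: "a' = x/(2*a)"
  shows "mk2 (1/a) (-(a-1/a)) 0 a ** mk2 a' (a' + a'/a^2) 0 (-a'/a^2) = Nm x z"
proof -
  have s1: "1 + x*z \<noteq> 0" using a s by (metis power_not_zero)
  show ?thesis
    apply (simp add: mk2_mult Nm_def mk2_eq_iff ad s[symmetric])
    using a by (auto simp: field_simps power2_eq_square)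
qed

lemma Cj_add: "Cj s (A + B) = Cj s A + Cj s B"
  by (simp add: Cj_def mk2_add add_divide_distrib[symmetric] algebra_simps)

lemma msc_nth[simp]: "msc k A $ i $ j = k * A $ i $ j"
  by (simp add: msc_def)

lemma Cj_msc: "Cj s (msc k A) = msc k (Cj s A)"
  by (simp add: Cj_def mk2_msc algebra_simps add_divide_distrib diff_divide_distrib)

lemma Cj_zero: "Cj s 0 = 0"
  by (simp add: Cj_def mk2_zero[symmetric])



lemma re_pos_nonpos: "0 < Re u \<Longrightarrow> u \<notin> \<real>\<^sub>\<le>\<^sub>0"
  by (auto simp: complex_nonpos_Reals_iff)

lemma small_re: assumes "cmod (x*z) < 1" shows "0 < Re (1 + x*z)"
proof -
  have "- Re (x*z) \<le> cmod (x*z)" using abs_Re_le_cmod[of "x*z"] by linarith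
  then show ?thesis using assms by simp
qed

lemma gauge_formula:
  assumes xz: "cmod (x*z) < 1"
  shows "gauge_act (pullback (hf c x) \<xi>) (\<lambda>z l. Gm x z) z l
     = Cj (x*z) (msc (c/(1+x*z)^2) (\<xi> (hf c x z) l)) + Nm x z"
proof -
  define u where "u = 1 + x*z"
  define a where "a = csqrt u"
  have up: "0 < Re u" using small_re[OF xz] by (simp add: u_def)
  have unp: "u \<notin> \<real>\<^sub>\<le>\<^sub>0" using re_pos_nonpos[OF up] .
  have u0: "u \<noteq> 0" using up by auto
  have a0: "a \<noteq> 0" using u0 by (simp add: a_def)
  have a2: "a^2 = u" by (simp add: a_def)
  define a' where "a' = x/(2*a)"
  have da: "((\<lambda>y. csqrt (1 + x*y)) has_field_derivative a') (at z)"
  proof -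
    have "((\<lambda>y. csqrt (1 + x*y)) has_field_derivative (x / (2 * csqrt (1 + x*z)))) (at z)"
      using unp unfolding u_def by (auto intro!: derivative_eq_intros)
    then show ?thesis by (simp add: a'_def a_def u_def)
  qed
  have dinv: "((\<lambda>y. 1 / csqrt (1 + x*y)) has_field_derivative (-a'/a^2)) (at z)"
  proof -
    have "((\<lambda>y. inverse (csqrt (1 + x*y))) has_field_derivative (- (inverse a * a' * inverse a))) (at z)"
      using DERIV_inverse_fun[OF da] a0 unfolding a_def u_def by (simp add: ac_simps)
    moreover have e1: "(\<lambda>y. 1 / csqrt (1 + x*y)) = (\<lambda>y. inverse (csqrt (1 + x*y)))"
      by (simp add: inverse_eq_divide)
    moreover have e2: "-a'/a^2 = - (inverse a * a' * inverse a)"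
      by (simp add: power2_eq_square inverse_eq_divide)
    ultimately show ?thesis by simp
  qed
  have d1: "deriv (\<lambda>y. Gm x y $ 1 $ 1) z = a'"
    by (simp add: Gm_def DERIV_imp_deriv[OF da])
  have d2: "deriv (\<lambda>y. Gm x y $ 1 $ 2) z = a' + a'/a^2"
  proof -
    have "((\<lambda>y. csqrt (1 + x*y) - 1 / csqrt (1 + x*y)) has_field_derivative (a' - (-a'/a^2))) (at z)"
      by (rule DERIV_diff[OF da dinv])
    then show ?thesis by (simp add: Gm_def DERIV_imp_deriv)
  qed
  have d3: "deriv (\<lambda>y. Gm x y $ 2 $ 1) z = 0"
    by (simp add: Gm_def)
  have d4: "deriv (\<lambda>y. Gm x y $ 2 $ 2) z = -a'/a^2"
    by (simp add: Gm_def DERIV_imp_deriv[OF dinv])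
  have GD: "(\<chi> i j. deriv (\<lambda>y. Gm x y $ i $ j) z) = mk2 a' (a' + a'/a^2) 0 (-a'/a^2)"
    by (rule cmat_eqI) (simp_all add: d1 d2 d3 d4)
  have hd: "deriv (hf c x) z = c/(1+x*z)^2"
  proof -
    have "(hf c x has_field_derivative c/(1+x*z)^2) (at z)"
      unfolding hf_def using u0 unfolding u_def
      by (auto intro!: derivative_eq_intros simp: field_simps power2_eq_square)
    then show ?thesis by (rule DERIV_imp_deriv)
  qed
  have G: "Gm x z = mk2 a (a - 1/a) 0 (1/a)" by (simp add: Gm_def a_def u_def)
  have Gi: "matrix_inv (Gm x z) = mk2 (1/a) (-(a-1/a)) 0 a"
    unfolding G using matrix_inv_mk2[of a "1/a" "a - 1/a" 0] a0 by simp
  show ?thesis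
    unfolding gauge_act_def pullback_def Gi GD hd
    apply (subst G)
    apply (subst conj_alg[OF a0])
     apply (simp add: a2 u_def)
    apply (subst Nm_alg[OF a0 _ a'_def, where z=z])
     apply (simp add: a2 u_def)
    ..
qed



lemma C2_neg: "C2_on f U \<Longrightarrow> open U \<Longrightarrow> C2_on (\<lambda>x. - f x) U"
  by (rule C2_lin_comp[OF bounded_linear_minus[OF bounded_linear_ident]])

lemma C2_diff: "C2_on f U \<Longrightarrow> C2_on g U \<Longrightarrow> open U \<Longrightarrow> C2_on (\<lambda>x. f x - g x) U"
  using C2_add[of f U "\<lambda>x. - g x"] C2_neg[of g U] by simp

lemma C2_mult: fixes f g :: "_ \<Rightarrow> 'a::real_normed_algebra"
  shows "C2_on f U \<Longrightarrow> C2_on g U \<Longrightarrow> open U \<Longrightarrow> C2_on (\<lambda>x. f x * g x) U"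
  by (rule C2_bilinear[OF bounded_bilinear_mult])

lemma C2_msc: "C2_on f U \<Longrightarrow> C2_on g U \<Longrightarrow> open U \<Longrightarrow> C2_on (\<lambda>x. msc (f x) (g x)) U"
  by (rule C2_bilinear[OF msc_bilinear])

lemma C2_entry: "C2_on (f :: _ \<Rightarrow> cmat) U \<Longrightarrow> open U \<Longrightarrow> C2_on (\<lambda>x. f x $ i $ j) U"
proof -
  assume "C2_on f U" "open U"
  have "bounded_linear (\<lambda>A::cmat. A $ i $ j)"
    using bounded_linear_compose[OF bounded_linear_vec_nth bounded_linear_vec_nth] .
  then show ?thesis using C2_lin_comp \<open>C2_on f U\<close> \<open>open U\<close> by blast
qed

lemma mk2_basis: "mk2 a b c d = msc a (mk2 1 0 0 0) + msc b (mk2 0 1 0 0) + msc c (mk2 0 0 1 0) + msc d (mk2 0 0 0 1)"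
  by (simp add: mk2_msc mk2_add)

lemma C2_mk2: "C2_on a U \<Longrightarrow> C2_on b U \<Longrightarrow> C2_on c U \<Longrightarrow> C2_on d U \<Longrightarrow> open U \<Longrightarrow>
   C2_on (\<lambda>x. mk2 (a x) (b x) (c x) (d x)) U"
proof -
  assume *: "C2_on a U" "C2_on b U" "C2_on c U" "C2_on d U" "open U"
  have "(\<lambda>x. mk2 (a x) (b x) (c x) (d x)) = (\<lambda>x. msc (a x) (mk2 1 0 0 0) + msc (b x) (mk2 0 1 0 0)
     + msc (c x) (mk2 0 0 1 0) + msc (d x) (mk2 0 0 0 1))"
    by (rule ext, rule mk2_basis)
  then show ?thesis by (simp only:) (intro C2_add C2_msc C2_const *)
qed

lemma C2_zproj: "C2_on (\<lambda>p::real\<times>complex\<times>complex. fst (snd p)) U"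
  by (rule C2_linear) (intro bounded_linear_compose[OF bounded_linear_fst bounded_linear_snd])

lemma C2_lproj: "C2_on (\<lambda>p::real\<times>complex\<times>complex. snd (snd p)) U"
  by (rule C2_linear) (intro bounded_linear_compose[OF bounded_linear_snd bounded_linear_snd])

lemma C2_zholo:
  assumes "F holomorphic_on S" "open S" "open U" "\<forall>p\<in>U. fst (snd p) \<in> S"
  shows "C2_on (\<lambda>p::real\<times>complex\<times>complex. F (fst (snd p))) U"
  using C2_compose[OF C2_zproj C2_holo[OF assms(1,2)] assms(3,2)] assms(4) by auto

lemma C2_lholo:
  assumes "F holomorphic_on S" "open S" "open U" "\<forall>p\<in>U. snd (snd p) \<in> S"
  shows "C2_on (\<lambda>p::real\<times>complex\<times>complex. F (snd (snd p))) U"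
  using C2_compose[OF C2_lproj C2_holo[OF assms(1,2)] assms(3,2)] assms(4) by auto

lemma open_small: "open {z::complex. cmod (x*z) < 1}"
  by (intro open_Collect_less continuous_intros)

lemma C2_inv_z:
  assumes "open U" "\<forall>p\<in>U. cmod (x * fst (snd p)) < 1"
  shows "C2_on (\<lambda>p::real\<times>complex\<times>complex. inverse (1 + x * fst (snd p))) U"
proof (rule C2_zholo[OF _ open_small assms(1)])
  show "(\<lambda>z. inverse (1 + x * z)) holomorphic_on {z. cmod (x * z) < 1}"
  proof (intro holomorphic_intros ballI)
    fix z assume "z \<in> {z. cmod (x * z) < 1}"
    then have "cmod (x*z) < 1" by simp
    then show "1 + x * z \<noteq> 0"
      by (metis add.commute add_eq_0_iff norm_minus_cancel norm_one order_less_irrefl)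
  qed
  show "\<forall>p\<in>U. fst (snd p) \<in> {z. cmod (x * z) < 1}" using assms(2) by simp
qed

lemma C2_inv_l:
  assumes "open U" "\<forall>p\<in>U. snd (snd p) \<noteq> 0"
  shows "C2_on (\<lambda>p::real\<times>complex\<times>complex. inverse (snd (snd p))) U"
  by (rule C2_lholo[OF _ open_delete[OF open_UNIV, of 0] assms(1)])
    (use assms(2) in \<open>auto intro!: holomorphic_intros\<close>)

lemma rD_C2: "C2_on rD {t. t < 1/16}"
proof (rule C2_field[where fa="\<lambda>t. 2 / sqrt (1 - 16*t)" and fb="\<lambda>t. 16 / ((1 - 16*t) * sqrt (1 - 16*t))"])
  show "\<forall>x\<in>{t. t < 1 / 16}. (rD has_field_derivative 2 / sqrt (1 - 16 * x)) (at x)"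
  proof
    fix t :: real assume "t \<in> {t. t < 1/16}"
    then have p: "0 < 1 - 16*t" by simp
    have "((\<lambda>t. (1 - sqrt (1 - 16*t)) / 4) has_field_derivative
           (- (inverse (sqrt (1 - 16*t)) / 2 * (- 16))) / 4) (at t)"
      using p by (auto intro!: derivative_eq_intros)
    moreover have "(- (inverse (sqrt (1 - 16*t)) / 2 * (- 16))) / 4 = 2 / sqrt (1 - 16 * t)"
      by (simp add: field_simps)
    ultimately show "(rD has_field_derivative 2 / sqrt (1 - 16 * t)) (at t)"
      by (simp add: rD_def[abs_def])
  qed
  show "\<forall>x\<in>{t. t < 1 / 16}. ((\<lambda>t. 2 / sqrt (1 - 16 * t)) has_field_derivative
          16 / ((1 - 16 * x) * sqrt (1 - 16 * x))) (at x)"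
  proof
    fix t :: real assume "t \<in> {t. t < 1/16}"
    then have p: "0 < 1 - 16*t" by simp
    then have sp: "0 < sqrt (1 - 16*t)" by simp
    have "((\<lambda>t. 2 / sqrt (1 - 16 * t)) has_field_derivative
       (- (2 * (inverse (sqrt (1 - 16*t)) / 2 * (- 16))) / (sqrt (1 - 16*t))\<^sup>2)) (at t)"
      using p sp by (auto intro!: derivative_eq_intros)
    moreover have "(- (2 * (inverse (sqrt (1 - 16*t)) / 2 * (- 16))) / (sqrt (1 - 16*t))\<^sup>2)
        = 16 / ((1 - 16 * t) * sqrt (1 - 16 * t))"
      using p sp by (simp add: field_simps)
    ultimately show "((\<lambda>t. 2 / sqrt (1 - 16 * t)) has_field_derivative
          16 / ((1 - 16 * t) * sqrt (1 - 16 * t))) (at t)" by simp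
  qed
  show "continuous_on {t. t < 1 / 16} (\<lambda>t. 16 / ((1 - 16 * t) * sqrt (1 - 16 * t)))"
    by (intro continuous_intros) auto
qed

lemma sD_eq: "sD t = 1/2 - rD t"
  by (simp add: sD_def rD_def field_simps)

lemma C2_rD:
  assumes "open U" "\<forall>p\<in>U. fst p < 1/16"
  shows "C2_on (\<lambda>p::real\<times>complex\<times>complex. complex_of_real (rD (fst p))) U"
proof -
  have "C2_on (\<lambda>p::real\<times>complex\<times>complex. rD (fst p)) U"
    using C2_compose[OF C2_linear[OF bounded_linear_fst] rD_C2 assms(1)] assms(2) open_lessThan[of "1/16::real"]
    by (auto simp: lessThan_def image_subset_iff)
  then show ?thesis by (rule C2_lin_comp[OF bounded_linear_of_real _ assms(1)])
qed

lemma C2_sD: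
  assumes "open U" "\<forall>p\<in>U. fst p < 1/16"
  shows "C2_on (\<lambda>p::real\<times>complex\<times>complex. complex_of_real (sD (fst p))) U"
  unfolding sD_eq of_real_diff by (intro C2_diff C2_const C2_rD assms)



lemma C2_inverse:
  assumes "C2_on (g :: _ \<Rightarrow> complex) U" "open U" "\<forall>p\<in>U. g p \<noteq> 0"
  shows "C2_on (\<lambda>p. inverse (g p)) U"
proof -
  have h: "C2_on inverse (UNIV - {0::complex})"
    by (rule C2_holo) (auto intro!: holomorphic_intros)
  show ?thesis
    using C2_compose[OF assms(1) h assms(2)] assms(3) by (auto simp: image_subset_iff)
qed

lemma C2_pow: "C2_on (f :: _ \<Rightarrow> complex) U \<Longrightarrow> open U \<Longrightarrow> C2_on (\<lambda>x. f x ^ n) U"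
  by (induction n) (auto intro!: C2_const C2_mult)

definition Sm :: "complex \<Rightarrow> complex \<Rightarrow> complex \<Rightarrow> complex \<Rightarrow> cmat" where
  "Sm x z p q = mk2 (-x*q) ((-2*x*p - x^2*z*(p+q))/(1+x*z)) 0 (x*q)"

definition pf :: "real \<Rightarrow> complex \<Rightarrow> complex" where
  "pf t l = inverse l * of_real (rD t) + of_real (sD t)"
definition qf :: "real \<Rightarrow> complex \<Rightarrow> complex" where
  "qf t l = l * of_real (rD t) + of_real (sD t)"

lemma DelA_pq: "DelA t l = mk2 0 (pf t l) (qf t l) 0"
  by (simp add: DelA_def pf_def qf_def)

lemma one_plus_nz: "cmod (x*z) < 1 \<Longrightarrow> 1 + x*z \<noteq> 0"
  by (metis add.commute add_eq_0_iff norm_minus_cancel norm_one order_less_irrefl)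

lemma hf_holo: "hf c x holomorphic_on {z. cmod (x*z) < 1}"
  unfolding hf_def by (auto intro!: holomorphic_intros dest: one_plus_nz)

lemma C2_Rcomp:
  fixes R :: "real \<Rightarrow> complex \<Rightarrow> complex \<Rightarrow> cmat" and U :: "(real\<times>complex\<times>complex) set"
  assumes R: "C2_on (\<lambda>(t,z,l). R t z l) V" and V: "open V" and U: "open U"
    and sm: "\<forall>p\<in>U. cmod (x * fst (snd p)) < 1"
    and gV: "\<forall>p\<in>U. (fst p, hf c x (fst (snd p)), snd (snd p)) \<in> V"
  shows "C2_on (\<lambda>p. R (fst p) (hf c x (fst (snd p))) (snd (snd p))) U"
proof -
  have g: "C2_on (\<lambda>p::real\<times>complex\<times>complex. (fst p, hf c x (fst (snd p)), snd (snd p))) U"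
    by (intro C2_pair C2_linear[OF bounded_linear_fst] C2_zholo[OF hf_holo open_small U] C2_lproj U)
      (use sm in auto)
  show ?thesis
    using C2_compose[OF g R U V] gV by (auto simp: image_subset_iff)
qed

definition Rt :: "(real \<Rightarrow> complex \<Rightarrow> complex \<Rightarrow> cmat) \<Rightarrow> complex \<Rightarrow> complex \<Rightarrow> real \<Rightarrow> complex \<Rightarrow> complex \<Rightarrow> cmat" where
  "Rt R c x t z l = Cj (x*z) (msc (c/(1+x*z)^2) (R t (hf c x z) l))
      + msc (1/(1+x*z)) (Sm x z (pf t l) (qf t l)) + Nm x z"

lemma C2_Rt:
  fixes R :: "real \<Rightarrow> complex \<Rightarrow> complex \<Rightarrow> cmat" and U :: "(real\<times>complex\<times>complex) set"
  assumes R: "C2_on (\<lambda>(t,z,l). R t z l) V" and V: "open V" and U: "open U"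
    and sm: "\<forall>p\<in>U. cmod (x * fst (snd p)) < 1"
    and gV: "\<forall>p\<in>U. (fst p, hf c x (fst (snd p)), snd (snd p)) \<in> V"
    and t16: "\<forall>p\<in>U. fst p < 1/16" and l0: "\<forall>p\<in>U. snd (snd p) \<noteq> 0"
  shows "C2_on (\<lambda>(t,z,l). Rt R c x t z l) U"
proof -
  note Rc = C2_Rcomp[OF R V U sm gV]
  have nz: "\<forall>p\<in>U. 1 + x * fst (snd p) \<noteq> 0" using sm one_plus_nz by blast
  have nz2: "\<forall>p\<in>U. 2 + 2 * (x * fst (snd p)) \<noteq> 0"
  proof
    fix p assume "p \<in> U"
    then have "1 + x * fst (snd p) \<noteq> 0" using nz by blast
    then have "2 * (1 + x * fst (snd p)) \<noteq> 0" by (simp only: mult_eq_0_iff) simp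
    then show "2 + 2 * (x * fst (snd p)) \<noteq> 0" by (metis distrib_left mult.right_neutral)
  qed
  have e: "(\<lambda>(t,z,l). Rt R c x t z l) = (\<lambda>p. Rt R c x (fst p) (fst (snd p)) (snd (snd p)))"
    by (simp add: fun_eq_iff)
  show ?thesis
    unfolding e unfolding Rt_def Cj_def Sm_def Nm_def pf_def qf_def mk2_msc mk2_add msc_nth divide_inverse
    by (intro C2_mk2 C2_add C2_diff C2_mult C2_neg C2_pow C2_const C2_zproj C2_lproj
        C2_rD C2_sD C2_entry[OF Rc] C2_inverse U t16) (use nz nz2 l0 in auto)
qed



lemma msc_add_right: "msc k (A + B) = msc k A + msc k B"
  by (rule cmat_eqI) (simp_all add: algebra_simps)

lemma msc_msc: "msc a (msc b A) = msc (a*b) A"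
  by (rule cmat_eqI) simp_all

lemma rD0: "rD 0 = 0" and sD0: "sD 0 = 1/2"
  by (simp_all add: rD_def sD_def)

lemma decomp_alg:
  assumes z: "z \<noteq> 0" and d: "1 + x*z \<noteq> 0" and c: "c \<noteq> 0"
  shows "Cj (x*z) (msc (c/(1+x*z)^2) (msc (1/hf c x z) (mk2 0 p q 0) + Rm)) + Nm x z
    = msc (1/z) (mk2 0 p q 0) + (Cj (x*z) (msc (c/(1+x*z)^2) Rm) + msc (1/(1+x*z)) (Sm x z p q) + Nm x z)"
proof -
  have "Cj (x*z) (msc (c/(1+x*z)^2) (msc (1/hf c x z) (mk2 0 p q 0)))
     = msc (1/z) (mk2 0 p q 0) + msc (1/(1+x*z)) (Sm x z p q)"
  proof -
    define e where "e = 1 + x*z"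
    have e0: "e \<noteq> 0" using d by (simp add: e_def)
    have xe: "x = (e - 1)/z" using z by (simp add: e_def field_simps)
    show ?thesis
      unfolding Cj_def Sm_def hf_def xe
      by (simp add: mk2_msc mk2_add mk2_eq_iff) (use z e0 c in \<open>auto simp: field_simps power2_eq_square\<close>)
  qed
  then show ?thesis
    by (simp add: msc_add_right Cj_add algebra_simps)
qed

lemma gen: "(D::complex) \<noteq> 0 \<Longrightarrow> 1 / D * (- x * (1 / 2)) + x / (2 * D) = 0 \<and>
     1 / D * (- x * D / D) + x / D = 0 \<and> 0 = (0::complex) \<and> 1 / D * (x * (1 / 2)) + - x / (2 * D) = 0"
  by (auto simp: field_simps)

lemma t0_alg:
  assumes d: "1 + x*z \<noteq> 0"
  shows "msc (1/(1+x*z)) (Sm x z (pf 0 l) (qf 0 l)) + Nm x z = 0"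
proof -
  have n: "-2*x*(1/2) - x^2*z*(1/2+1/2) = -x*(1+x*z)" by (simp add: algebra_simps power2_eq_square)
  show ?thesis
  unfolding Sm_def Nm_def pf_def qf_def rD0 sD0
  apply (simp only: mk2_msc mk2_add mk2_zero mk2_eq_iff of_real_0 mult_zero_right add_0 of_real_divide of_real_1 of_real_numeral)
  apply (simp only: n)
  by (rule gen[OF d])
qed



definition Em :: "complex \<Rightarrow> cmat" where
  "Em e = mk2 ((e + 1/e)/2) ((e - 1/e)/2) ((e - 1/e)/2) ((e + 1/e)/2)"
definition Ef :: "complex \<Rightarrow> cmat" where
  "Ef w = Em (exp (w/2))"
definition A0 :: cmat where "A0 = mk2 0 (1/2) (1/2) 0"

lemma DelA0: "DelA 0 l = A0"
  by (simp add: DelA_def A0_def rD0 sD0)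

lemma Em_mult_inv: "e \<noteq> 0 \<Longrightarrow> Em (1/e) ** Em e = mat 1"
  by (simp add: Em_def mk2_mult mk2_mat1 mk2_eq_iff) (auto simp: field_simps)

lemma Em_det: "e \<noteq> 0 \<Longrightarrow> det (Em e) = 1"
  by (simp add: Em_def mk2_det) (auto simp: field_simps)

lemma Ef_neg_mult: "Ef (-w) ** Ef w = mat 1"
proof -
  have "exp (-w/2) = 1 / exp (w/2)" by (simp add: exp_minus inverse_eq_divide)
  then show ?thesis by (simp add: Ef_def Em_mult_inv)
qed

lemma Ef_0: "Ef 0 = mat 1"
  by (simp add: Ef_def Em_def mk2_mat1)

lemma Ef_det: "det (Ef w) = 1"
  by (simp add: Ef_def Em_det)

lemma Em_A0_comm: "Em e ** A0 = A0 ** Em e"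
  by (simp add: Em_def A0_def mk2_mult mk2_eq_iff)

lemma mhas_deriv_mult:
  assumes "mhas_deriv f Df w" "mhas_deriv g Dg w"
  shows "mhas_deriv (\<lambda>w. f w ** g w) (Df ** g w + f w ** Dg) w"
  unfolding mhas_deriv_def
proof (intro allI)
  fix i j
  have "((\<lambda>y. f y $ i $ 1 * g y $ 1 $ j + f y $ i $ 2 * g y $ 2 $ j) has_field_derivative
     (Df $ i $ 1 * g w $ 1 $ j + f w $ i $ 1 * Dg $ 1 $ j + (Df $ i $ 2 * g w $ 2 $ j + f w $ i $ 2 * Dg $ 2 $ j))) (at w)"
  proof -
    have fi: "((\<lambda>y. f y$i$j) has_field_derivative Df$i$j) (at w)" for i j using assms(1) by (simp add: mhas_deriv_def)
    have gi: "((\<lambda>y. g y$i$j) has_field_derivative Dg$i$j) (at w)" for i j using assms(2) by (simp add: mhas_deriv_def)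
    have p: "((\<lambda>y. f y $ i $ k * g y $ k $ j) has_field_derivative (Df $ i $ k * g w $ k $ j + f w $ i $ k * Dg $ k $ j)) (at w)" for k
      using DERIV_mult[OF fi gi] by (simp add: algebra_simps)
    show ?thesis by (intro DERIV_add p)
  qed
  then show "((\<lambda>y. (f y ** g y) $ i $ j) has_field_derivative (Df ** g w + f w ** Dg) $ i $ j) (at w)"
    by (simp add: matrix_matrix_mult_def sum_2 algebra_simps)
qed

lemma mhas_deriv_const: "mhas_deriv (\<lambda>w. K) 0 w"
  by (simp add: mhas_deriv_def)

lemma Ef_deriv: "mhas_deriv Ef (Ef w ** A0) w"
proof -
  define e where "e = exp (w/2)"
  have e0: "e \<noteq> 0" by (simp add: e_def)
  have de: "((\<lambda>w. exp (w/2)) has_field_derivative e/2) (at w)"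
    unfolding e_def by (auto intro!: derivative_eq_intros)
  have di: "((\<lambda>w. 1 / exp (w/2)) has_field_derivative - (1/e)/2) (at w)"
    unfolding e_def by (auto intro!: derivative_eq_intros simp: field_simps exp_minus)
  have dp: "((\<lambda>w. (exp (w/2) + 1 / exp (w/2))/2) has_field_derivative ((e - 1/e)/2)/2) (at w)"
    using DERIV_cdivide[OF DERIV_add[OF de di], of 2] by (simp add: field_simps)
  have dm: "((\<lambda>w. (exp (w/2) - 1 / exp (w/2))/2) has_field_derivative ((e + 1/e)/2)/2) (at w)"
    using DERIV_cdivide[OF DERIV_diff[OF de di], of 2] by (simp add: field_simps)
  have M: "Ef w ** A0 = mk2 (((e - 1/e)/2)/2) (((e + 1/e)/2)/2) (((e + 1/e)/2)/2) (((e - 1/e)/2)/2)"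
    by (simp add: Ef_def Em_def A0_def mk2_mult e_def)
  show ?thesis
    unfolding mhas_deriv_def M
    using dp dm by (simp add: Ef_def Em_def forall_2)
qed

lemma Ef_neg_deriv: "mhas_deriv (\<lambda>w. Ef (-w)) (- (A0 ** Ef (-w))) w"
proof -
  have "mhas_deriv Ef (Ef (-w) ** A0) (-w)" by (rule Ef_deriv)
  then have *: "\<forall>i j. ((\<lambda>y. Ef y $ i $ j) has_field_derivative (Ef (-w) ** A0) $ i $ j) (at (-w))"
    by (simp add: mhas_deriv_def)
  show ?thesis unfolding mhas_deriv_def
  proof (intro allI)
    fix i j
    have "((\<lambda>y. Ef (-y) $ i $ j) has_field_derivative (Ef (-w) ** A0) $ i $ j * (-1)) (at w)"
      using DERIV_chain2[OF *[rule_format, of i j] DERIV_minus[OF DERIV_ident]] by simp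
    moreover have "(Ef (-w) ** A0) $ i $ j * (-1) = (- (A0 ** Ef (-w))) $ i $ j"
      by (simp add: Ef_def Em_A0_comm)
    ultimately show "((\<lambda>y. Ef (-y) $ i $ j) has_field_derivative (- (A0 ** Ef (-w))) $ i $ j) (at w)"
      by simp
  qed
qed

lemma ode_unique:
  assumes "\<forall>w. mhas_deriv Psi (Psi w ** A0) w"
  shows "Psi w = Psi 0 ** Ef w"
proof -
  define Y where "Y w = Psi w ** Ef (-w)" for w
  have dY: "mhas_deriv Y 0 w" for w
  proof -
    have "mhas_deriv Y (Psi w ** A0 ** Ef (-w) + Psi w ** (- (A0 ** Ef (-w)))) w"
      unfolding Y_def[abs_def] by (rule mhas_deriv_mult[OF assms[rule_format] Ef_neg_deriv])
    moreover have "Psi w ** A0 ** Ef (-w) + Psi w ** (- (A0 ** Ef (-w))) = 0"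
      by (rule cmat_eqI) (simp_all add: matrix_matrix_mult_def sum_2 algebra_simps)
    ultimately show ?thesis by simp
  qed
  have c: "Y w $ i $ j = Y 0 $ i $ j" for i j
  proof -
    have "\<exists>k. \<forall>x\<in>UNIV. Y x $ i $ j = k"
      by (rule has_field_derivative_zero_constant[of UNIV]) (use dY in \<open>auto simp: mhas_deriv_def\<close>)
    then show ?thesis by auto
  qed
  have "Y w = Y 0" by (rule cmat_eqI) (simp_all add: c)
  then have "Y w = Psi 0" by (simp add: Y_def Ef_0)
  have "Psi w = Psi w ** (Ef (-w) ** Ef w)" by (simp add: Ef_neg_mult)
  also have "\<dots> = Y w ** Ef w" by (simp add: Y_def matrix_mul_assoc)
  finally show ?thesis using \<open>Y w = Psi 0\<close> by simp
qed



lemma ct_mult: "conj_transpose ((A::cmat) ** B) = conj_transpose B ** conj_transpose A"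
  by (rule cmat_eqI) (simp_all add: conj_transpose_def matrix_matrix_mult_def sum_2 mult.commute)

lemma SU2_mult: assumes "A \<in> SU2" "B \<in> SU2" shows "A ** B \<in> SU2"
proof -
  have "A ** B ** conj_transpose (A ** B) = A ** (B ** conj_transpose B) ** conj_transpose A"
    by (simp add: ct_mult matrix_mul_assoc)
  also have "\<dots> = mat 1" using assms by (simp add: SU2_def)
  finally show ?thesis using assms by (simp add: SU2_def det_mul)
qed

lemma SU2_form:
  assumes "Q \<in> SU2"
  shows "Q = mk2 (Q$1$1) (Q$1$2) (- cnj (Q$1$2)) (cnj (Q$1$1)) \<and> cmod (Q$1$1)^2 + cmod (Q$1$2)^2 = 1"
proof -
  have r: "Q ** conj_transpose Q = mat 1" and d: "det Q = 1" using assms by (auto simp: SU2_def)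
  have l: "conj_transpose Q ** Q = mat 1" using r matrix_left_right_inverse by blast
  have i1: "matrix_inv Q = conj_transpose Q" by (rule matrix_inv_eq[OF r l])
  have "Q$1$1 * Q$2$2 - Q$1$2 * Q$2$1 = 1" using d by (simp add: det_2)
  then have i2: "matrix_inv Q = mk2 (Q$2$2) (-Q$1$2) (-Q$2$1) (Q$1$1)"
    using matrix_inv_mk2[of "Q$1$1" "Q$2$2" "Q$1$2" "Q$2$1"] cmat_mk2[of Q, symmetric] by simp
  have ct: "conj_transpose Q = mk2 (cnj (Q$1$1)) (cnj (Q$2$1)) (cnj (Q$1$2)) (cnj (Q$2$2))"
    by (rule cmat_eqI) (simp_all add: conj_transpose_def)
  have "mk2 (cnj (Q$1$1)) (cnj (Q$2$1)) (cnj (Q$1$2)) (cnj (Q$2$2)) = mk2 (Q$2$2) (-Q$1$2) (-Q$2$1) (Q$1$1)"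
    using i1 i2 ct by simp
  then have e: "cnj (Q$1$1) = Q$2$2" "cnj (Q$2$1) = - Q$1$2"
    unfolding mk2_eq_iff by simp_all
  have q21: "Q$2$1 = - cnj (Q$1$2)" using e(2) by (metis complex_cnj_cnj complex_cnj_minus)
  have q22: "Q$2$2 = cnj (Q$1$1)" using e(1) by simp
  have "(Q ** conj_transpose Q) $ 1 $ 1 = 1" using r by (simp add: mat_def)
  then have "Q$1$1 * cnj (Q$1$1) + Q$1$2 * cnj (Q$1$2) = 1"
    by (simp add: matrix_matrix_mult_def sum_2 conj_transpose_def)
  then have "complex_of_real (cmod (Q$1$1)^2 + cmod (Q$1$2)^2) = 1"
    by (simp only: of_real_add complex_norm_square)
  then have "cmod (Q$1$1)^2 + cmod (Q$1$2)^2 = 1" using of_real_eq_1_iff by blast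
  moreover have "Q = mk2 (Q$1$1) (Q$1$2) (- cnj (Q$1$2)) (cnj (Q$1$1))"
    using cmat_mk2[of Q] q21 q22 by simp
  ultimately show ?thesis by simp
qed

definition Bcond :: "cmat \<Rightarrow> bool" where
  "Bcond B \<longleftrightarrow> B $ 2 $ 1 = 0 \<and> Im (B $ 1 $ 1) = 0 \<and> 0 < Re (B $ 1 $ 1) \<and> Im (B $ 2 $ 2) = 0 \<and> 0 < Re (B $ 2 $ 2)"

lemma QR_exists_unique:
  assumes dX: "det X = 1"
  shows "\<exists>!Q. Q \<in> SU2 \<and> (\<exists>B. Bcond B \<and> X = Q ** B)"
proof -
  define a where "a = X$1$1"
  define c where "c = X$2$1"
  define N where "N = cmod a ^ 2 + cmod c ^ 2"
  define n where "n = sqrt N"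
  have dd: "a * X$2$2 - X$1$2 * c = 1" using dX by (simp add: det_2 a_def c_def)
  have Npos: "0 < N"
  proof -
    have "a \<noteq> 0 \<or> c \<noteq> 0" using dd by auto
    then show ?thesis unfolding N_def by (auto intro: add_pos_nonneg add_nonneg_pos)
  qed
  have npos: "0 < n" using Npos by (simp add: n_def)
  have nN: "complex_of_real n * complex_of_real n = a * cnj a + c * cnj c"
  proof -
    have "complex_of_real n * complex_of_real n = complex_of_real N"
      using Npos by (simp flip: of_real_mult add: n_def)
    also have "\<dots> = a * cnj a + c * cnj c" by (simp only: N_def of_real_add complex_norm_square)
    finally show ?thesis .
  qed
  define nc where "nc = complex_of_real n"
  have nc0: "nc \<noteq> 0" using npos by (simp add: nc_def)
  define Q0 where "Q0 = mk2 (a/nc) (- cnj c/nc) (c/nc) (cnj a/nc)"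
  have cnc: "cnj nc = nc" by (simp add: nc_def)
  have nN': "nc * nc = a * cnj a + c * cnj c" using nN by (simp add: nc_def)
  have Q0SU: "Q0 \<in> SU2"
  proof -
    define u where "u = a/nc"
    define v where "v = c/nc"
    have h: "u * cnj u + v * cnj v = 1"
    proof -
      have "u * cnj u + v * cnj v = (a * cnj a + c * cnj c) / (nc * nc)"
        by (simp add: u_def v_def cnc add_divide_distrib)
      also have "\<dots> = 1" using nN' nc0 by (simp flip: nN')
      finally show ?thesis .
    qed
    have Qe: "Q0 = mk2 u (- cnj v) v (cnj u)" by (simp add: Q0_def u_def v_def cnc)
    have "Q0 ** conj_transpose Q0 = mat 1"
      unfolding Qe mk2_ct mk2_mult mk2_mat1 mk2_eq_iff
      using h by simp (simp add: algebra_simps)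
    moreover have "det Q0 = 1"
      unfolding Qe mk2_det using h by (simp add: algebra_simps)
    ultimately show ?thesis by (simp add: SU2_def)
  qed
  define B0 where "B0 = mk2 nc ((cnj a * X$1$2 + cnj c * X$2$2)/nc) 0 (1/nc)"
  have B0c: "Bcond B0" using npos by (simp add: Bcond_def B0_def nc_def)
  have XQB: "X = Q0 ** B0"
  proof -
    have "X = mk2 a (X$1$2) c (X$2$2)" using cmat_mk2[of X] by (simp add: a_def c_def)
    also have "\<dots> = Q0 ** B0"
      unfolding Q0_def B0_def mk2_mult mk2_eq_iff
    proof (intro conjI)
      show "a = a / nc * nc + - cnj c / nc * 0" using nc0 by simp
      show "c = c / nc * nc + cnj a / nc * 0" using nc0 by simp
      show "X $ 1 $ 2 = a / nc * ((cnj a * X $ 1 $ 2 + cnj c * X $ 2 $ 2) / nc) + - cnj c / nc * (1 / nc)"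
      proof -
        have "a * (cnj a * X $ 1 $ 2 + cnj c * X $ 2 $ 2) - cnj c
            = X$1$2 * (a * cnj a + c * cnj c) + cnj c * (a * X$2$2 - X$1$2 * c - 1)"
          by (simp add: algebra_simps)
        then have "a * (cnj a * X $ 1 $ 2 + cnj c * X $ 2 $ 2) - cnj c = X$1$2 * (nc * nc)"
          using dd unfolding nN' by simp
        then show ?thesis using nc0 by (simp add: field_simps)
      qed
      show "X $ 2 $ 2 = c / nc * ((cnj a * X $ 1 $ 2 + cnj c * X $ 2 $ 2) / nc) + cnj a / nc * (1 / nc)"
      proof -
        have "c * (cnj a * X $ 1 $ 2 + cnj c * X $ 2 $ 2) + cnj a
            = X$2$2 * (a * cnj a + c * cnj c) - cnj a * (a * X$2$2 - X$1$2 * c - 1)"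
          by (simp add: algebra_simps)
        then have "c * (cnj a * X $ 1 $ 2 + cnj c * X $ 2 $ 2) + cnj a = X$2$2 * (nc * nc)"
          using dd unfolding nN' by simp
        then show ?thesis using nc0 by (simp add: field_simps)
      qed
    qed
    finally show ?thesis .
  qed
  show ?thesis
  proof (rule ex1I[of _ Q0])
    show "Q0 \<in> SU2 \<and> (\<exists>B. Bcond B \<and> X = Q0 ** B)" using Q0SU B0c XQB by blast
  next
    fix Q assume "Q \<in> SU2 \<and> (\<exists>B. Bcond B \<and> X = Q ** B)"
    then obtain B where Q: "Q \<in> SU2" and B: "Bcond B" and XB: "X = Q ** B" by blast
    define q where "q = Q$1$1"
    define p where "p = Q$1$2"
    have Qf: "Q = mk2 q p (- cnj p) (cnj q)" and qp: "cmod q ^2 + cmod p ^2 = 1"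
      using SU2_form[OF Q] by (simp_all add: q_def p_def)
    define \<beta> where "\<beta> = Re (B$1$1)"
    have b11: "B$1$1 = complex_of_real \<beta>" using B by (simp add: Bcond_def \<beta>_def complex_eq_iff)
    have bpos: "0 < \<beta>" using B by (simp add: Bcond_def \<beta>_def)
    have b21: "B$2$1 = 0" using B by (simp add: Bcond_def)
    have ea: "a = q * \<beta>" using XB by (simp add: a_def Qf matrix_matrix_mult_def sum_2 b11 b21)
    have ec: "c = - cnj p * \<beta>" using XB by (simp add: c_def Qf matrix_matrix_mult_def sum_2 b11 b21)
    have "N = \<beta>^2 * (cmod q ^2 + cmod p ^2)"
      unfolding N_def ea ec by (simp add: norm_mult power_mult_distrib algebra_simps abs_of_pos bpos)
    then have "N = \<beta>^2" using qp by simp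
    then have nb: "n = \<beta>" using bpos by (simp add: n_def)
    then have ncb: "nc = complex_of_real \<beta>" by (simp add: nc_def)
    have b0: "complex_of_real \<beta> \<noteq> 0" using bpos by simp
    have QQ: "Q0 = mk2 q p (- cnj p) (cnj q)"
      unfolding Q0_def ncb ea ec mk2_eq_iff using b0 by simp
    show "Q = Q0" by (rule trans[OF Qf QQ[symmetric]])
  qed
qed

lemma Uni_const_prop:
  assumes "det X = 1"
  shows "Uni_const X \<in> SU2 \<and> (\<exists>B. Bcond B \<and> X = Uni_const X ** B)"
proof -
  have "Uni_const X = (THE Q. Q \<in> SU2 \<and> (\<exists>B. Bcond B \<and> X = Q ** B))"
    unfolding Uni_const_def Bcond_def conj_assoc by (rule refl)
  then show ?thesis using theI'[OF QR_exists_unique[OF assms]] by (simp only:)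
qed



definition sq2 :: complex where "sq2 = 1 / complex_of_real (sqrt 2)"

lemma sq2_sq: "sq2 * sq2 = 1/2"
  by (simp add: sq2_def flip: of_real_mult)

lemma Hmat_mk2: "Hmat = mk2 sq2 sq2 (-sq2) sq2"
  by (simp add: Hmat_def sq2_def mk2_msc)

definition Hi :: cmat where "Hi = mk2 sq2 (-sq2) sq2 sq2"

lemma Hmat_inv: "matrix_inv Hmat = Hi"
  unfolding Hmat_mk2 Hi_def
  using matrix_inv_mk2[of sq2 sq2 sq2 "-sq2"] sq2_sq by simp

lemma Hmat_Hi: "Hmat ** Hi = mat 1"
  by (simp add: Hmat_mk2 Hi_def mk2_mult mk2_mat1 sq2_sq)

lemma Hi_SU2: "Hi \<in> SU2"
proof -
  have c: "cnj sq2 = sq2" by (simp add: sq2_def)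
  show ?thesis
    by (simp add: SU2_def Hi_def mk2_ct mk2_mult mk2_mat1 mk2_det c sq2_sq)
qed

lemma det_Hmat: "det Hmat = 1"
  by (simp add: Hmat_mk2 mk2_det sq2_sq)

lemma value_alg:
  assumes b: "\<beta> \<noteq> 0" and e: "e \<noteq> 0" and a: "a \<noteq> 0" and a2: "a^2 = 1 - \<gamma>*\<beta>*e^2"
  shows "mk2 \<beta> \<gamma> 0 (1/\<beta>) ** Hi ** Em (\<beta>*e/a) ** mk2 a (a - 1/a) 0 (1/a) = Hi ** Em e"
proof -
  have g: "\<gamma> = (1 - a^2)/(\<beta>*e^2)" using a2 b e by (simp add: field_simps)
  show ?thesis
    unfolding g Hi_def Em_def mk2_mult mk2_eq_iff
    using a b e by (simp add: field_simps power2_eq_square)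
qed



lemma mholo_mk2:
  "a holomorphic_on S \<Longrightarrow> b holomorphic_on S \<Longrightarrow> c holomorphic_on S \<Longrightarrow> d holomorphic_on S \<Longrightarrow>
   mholo (\<lambda>z. mk2 (a z) (b z) (c z) (d z)) S"
  unfolding mholo_def by (simp add: forall_2)

lemma mholo_entry: "mholo f S \<Longrightarrow> (\<lambda>z. f z $ i $ j) holomorphic_on S"
  by (simp add: mholo_def)

lemma mholo_eq: "mholo f S \<Longrightarrow> (\<And>z. z \<in> S \<Longrightarrow> f z = g z) \<Longrightarrow> mholo g S"
  unfolding mholo_def
proof (intro allI)
  fix i j assume "\<forall>i j. (\<lambda>x. f x $ i $ j) holomorphic_on S" "\<And>z. z \<in> S \<Longrightarrow> f z = g z"
  then show "(\<lambda>x. g x $ i $ j) holomorphic_on S"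
    using holomorphic_transform[of "\<lambda>x. f x $ i $ j" S "\<lambda>x. g x $ i $ j"] by simp
qed

lemma mholo_add: "mholo f S \<Longrightarrow> mholo g S \<Longrightarrow> mholo (\<lambda>x. f x + g x) S"
  unfolding mholo_def by (auto intro!: holomorphic_intros)

lemma mholo_msc: "k holomorphic_on S \<Longrightarrow> mholo f S \<Longrightarrow> mholo (\<lambda>x. msc (k x) (f x)) S"
  unfolding mholo_def by (auto intro!: holomorphic_intros)

lemma mholo_const: "mholo (\<lambda>x. K) S"
  unfolding mholo_def by (auto intro!: holomorphic_intros)

lemma mholo_Cj:
  assumes "mholo f S" "s holomorphic_on S" "\<forall>z\<in>S. 1 + s z \<noteq> 0"
  shows "mholo (\<lambda>z. Cj (s z) (f z)) S"
  unfolding Cj_def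
  by (intro mholo_mk2 holomorphic_intros mholo_entry[OF assms(1)] assms(2)) (use assms(3) in auto)

lemma mholo_compose:
  assumes "mholo f T" "g holomorphic_on S" "g ` S \<subseteq> T"
  shows "mholo (\<lambda>z. f (g z)) S"
  unfolding mholo_def
proof (intro allI)
  fix i j
  have "(\<lambda>z. f z $ i $ j) holomorphic_on T" using assms(1) by (simp add: mholo_def)
  then show "(\<lambda>z. f (g z) $ i $ j) holomorphic_on S"
    using holomorphic_on_compose_gen[OF assms(2) _ assms(3)] by (simp add: o_def)
qed

lemma two_plus: "(2::complex) + 2*y = 0 \<Longrightarrow> 1 + y = 0"
proof -
  assume a: "2 + 2*y = 0"
  have e: "2 * (1 + y) = 2 + 2*y" by (simp only: distrib_left mult_1_right)
  have "2 * (1 + y) = 0" using a e by (simp only:)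
  then show "1 + y = 0" by (simp only: mult_eq_0_iff) simp
qed

lemma mholo_Nm: "\<forall>z\<in>S. 1 + x*z \<noteq> 0 \<Longrightarrow> mholo (\<lambda>z. Nm x z) S"
  unfolding Nm_def by (intro mholo_mk2 holomorphic_intros) (auto dest: two_plus)

lemma Cj_trace: "Cj s M $ 1 $ 1 + Cj s M $ 2 $ 2 = M $ 1 $ 1 + M $ 2 $ 2"
  by (simp add: Cj_def algebra_simps)

lemma Nm_trace: "Nm x z $ 1 $ 1 + Nm x z $ 2 $ 2 = 0"
  by (simp add: Nm_def)

lemma msc_comm: "msc a (msc b A) = msc b (msc a A)"
  by (simp add: msc_msc mult.commute)

lemma msc_Cj: "msc k (Cj s A) = Cj s (msc k A)"
  by (simp add: Cj_msc)

lemma Cj_F0: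
  assumes "F0 $ 1 $ 1 = 0" "F0 $ 2 $ 1 = 0" "F0 $ 2 $ 2 = 0"
  shows "Cj s (msc k F0) $ 1 $ 1 = 0" "Cj s (msc k F0) $ 2 $ 1 = 0" "Cj s (msc k F0) $ 2 $ 2 = 0"
  using assms by (simp_all add: Cj_def)



lemma open_annulus: "open (annulus \<rho>)"
  unfolding annulus_def by (intro open_Collect_conj open_Collect_less continuous_intros)

lemma open_logdisk: "open (logdisk e)"
  unfolding logdisk_def by (intro open_Collect_less continuous_intros)

lemma logdisk_exp: "w \<in> logdisk e \<Longrightarrow> 0 < e \<Longrightarrow> cmod (exp w) < e"
  by (simp add: logdisk_def) (metis exp_less_cancel_iff exp_ln)

lemma logdisk_iff: "0 < e \<Longrightarrow> w \<in> logdisk e \<longleftrightarrow> cmod (exp w) < e"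
  by (simp add: logdisk_def) (metis exp_less_cancel_iff exp_ln)

theorem lemma2:
  fixes \<xi> \<Phi> :: "real \<Rightarrow> complex \<Rightarrow> complex \<Rightarrow> cmat"
    and T \<epsilon> \<rho> :: real and C0 :: cmat
  assumes "pert_delaunay \<xi> T \<epsilon> \<rho>"
    and "sol_family \<xi> \<Phi> T \<epsilon> \<rho>"
    and "\<forall>t\<in>{-T<..<T}. monodromy_problem (\<Phi> t) \<epsilon> \<rho>"
    and "value_at_one (\<Phi> 0) (logdisk \<epsilon>) \<rho> (\<lambda>_. C0)"
  shows "\<exists>T' \<epsilon>' \<rho>' h hl G.
     0 < T' \<and> T' \<le> T \<and> 0 < \<epsilon>' \<and> 1 < \<rho>' \<and> \<rho>' \<le> \<rho> \<and>
     change_of_var h \<epsilon>' \<epsilon> \<and> is_lift hl h \<epsilon>' \<epsilon> \<and> is_gauge G \<epsilon>' \<rho>' \<and>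
     pert_delaunay (\<lambda>t. gauge_act (pullback h (\<xi> t)) G) T' \<epsilon>' \<rho>' \<and>
     value_at_one (\<lambda>w l. \<Phi> 0 (hl w) l ** G (exp w) l) (logdisk \<epsilon>') \<rho>'
        (\<lambda>_. Uni_const (C0 ** Hmat) ** matrix_inv Hmat) \<and>
     Uni_const (C0 ** Hmat) ** matrix_inv Hmat \<in> SU2"
proof -
  have T0: "0 < T" and T16: "T \<le> 1/16" and e0: "0 < \<epsilon>" and r1: "1 < \<rho>"
    using assms(1) unfolding pert_delaunay_def by auto
  obtain R where RC2: "C2_on (\<lambda>(t, z, l). R t z l) ({-T<..<T} \<times> ball 0 \<epsilon> \<times> annulus \<rho>)"
     and R0: "\<forall>z\<in>ball 0 \<epsilon>. \<forall>l\<in>annulus \<rho>. R 0 z l = 0"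
     and Rdec: "\<forall>t\<in>{-T<..<T}. \<forall>z\<in>ball 0 \<epsilon> - {0}. \<forall>l\<in>annulus \<rho>.
              \<xi> t z l = msc (1 / z) (DelA t l) + R t z l"
    using assms(1) unfolding pert_delaunay_def by blast
  have DPW: "\<forall>t\<in>{-T<..<T}. DPW_pot (\<xi> t) (ball 0 \<epsilon> - {0}) \<rho>"
    using assms(1) unfolding pert_delaunay_def by blast
  have detPhi: "\<forall>t\<in>{-T<..<T}. \<forall>w\<in>logdisk \<epsilon>. \<forall>l\<in>annulus \<rho>. det (\<Phi> t w l) = 1"
    using assms(2) unfolding sol_family_def by blast
  obtain \<Psi> where \<Psi>: "\<forall>l\<in>annulus \<rho>.
      (\<forall>w. mhas_deriv (\<lambda>w. \<Psi> w l) (\<Psi> w l ** DelA 0 l) w) \<and>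
      (\<forall>w\<in>logdisk \<epsilon>. \<Psi> w l = \<Phi> 0 w l) \<and> \<Psi> 0 l = C0"
    using assms(4) unfolding value_at_one_def by blast
  have \<Psi>f: "\<Psi> w l = C0 ** Ef w" if l: "l \<in> annulus \<rho>" for w l
  proof -
    have "\<forall>w. mhas_deriv (\<lambda>w. \<Psi> w l) (\<Psi> w l ** A0) w" using \<Psi> l by (simp add: DelA0)
    from ode_unique[OF this] show ?thesis using \<Psi> l by simp
  qed
  have l1: "1 \<in> annulus \<rho>" using r1 by (simp add: annulus_def)
  define w0 where "w0 = complex_of_real (ln \<epsilon> - 1)"
  have w0: "w0 \<in> logdisk \<epsilon>" by (simp add: w0_def logdisk_def)
  have detC0: "det C0 = 1"
  proof -
    have "det (\<Phi> 0 w0 1) = 1" using detPhi w0 l1 T0 by simp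
    moreover have "\<Phi> 0 w0 1 = C0 ** Ef w0" using \<Psi> \<Psi>f[OF l1] l1 w0 by metis
    ultimately show ?thesis by (simp add: det_mul Ef_det)
  qed
  define X where "X = C0 ** Hmat"
  have detX: "det X = 1" by (simp add: X_def det_mul detC0 det_Hmat)
  define Q where "Q = Uni_const X"
  obtain B where QSU: "Q \<in> SU2" and Bc: "Bcond B" and XQB: "X = Q ** B"
    using Uni_const_prop[OF detX] unfolding Q_def by blast
  define \<beta> where "\<beta> = Re (B$1$1)"
  define \<delta> where "\<delta> = Re (B$2$2)"
  define \<gamma> where "\<gamma> = B$1$2"
  have bpos: "0 < \<beta>" and dpos: "0 < \<delta>" using Bc by (simp_all add: Bcond_def \<beta>_def \<delta>_def)
  have b11: "B$1$1 = complex_of_real \<beta>" using Bc by (simp add: Bcond_def \<beta>_def complex_eq_iff)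
  have b22: "B$2$2 = complex_of_real \<delta>" using Bc by (simp add: Bcond_def \<delta>_def complex_eq_iff)
  have b21: "B$2$1 = 0" using Bc by (simp add: Bcond_def)
  have detQ: "det Q = 1" using QSU by (simp add: SU2_def)
  have "det B = 1" using detX detQ XQB by (simp add: det_mul)
  then have "\<beta> * \<delta> = 1" by (simp add: det_2 b11 b22 b21 flip: of_real_mult)
  then have dbeta: "\<delta> = 1/\<beta>" using bpos by (simp add: field_simps)
  have Bf: "B = mk2 (complex_of_real \<beta>) \<gamma> 0 (1 / complex_of_real \<beta>)"
    using cmat_mk2[of B] by (simp add: b11 b22 b21 \<gamma>_def dbeta)
  define bc where "bc = complex_of_real \<beta>"
  have bc0: "bc \<noteq> 0" using bpos by (simp add: bc_def)
  define x where "x = - \<gamma> * bc"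
  define c where "c = bc^2"
  have c0: "c \<noteq> 0" using bc0 by (simp add: c_def)
  define \<epsilon>' where "\<epsilon>' = min (1/(2*(cmod x + 1))) (\<epsilon>/(2*\<beta>^2+1))"
  have p1: "0 < 1/(2*(cmod x + 1))"
  proof -
    have "0 < cmod x + 1" using norm_ge_zero[of x] by linarith
    then show ?thesis by simp
  qed
  have p2: "0 < \<epsilon>/(2*\<beta>^2+1)"
  proof -
    have "0 \<le> \<beta>^2" by simp
    then have "0 < 2*\<beta>^2+1" by linarith
    then show ?thesis using e0 by simp
  qed
  have ep0: "0 < \<epsilon>'" using p1 p2 by (simp add: \<epsilon>'_def)
  have xsmall: "cmod (x*z) < 1/2" if "z \<in> ball 0 \<epsilon>'" for z
  proof -
    have z: "cmod z < 1/(2*(cmod x + 1))" using that by (simp add: \<epsilon>'_def)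
    have "cmod (x*z) = cmod x * cmod z" by (simp add: norm_mult)
    also have "\<dots> \<le> (cmod x + 1) * cmod z" by (simp add: mult_right_mono)
    also have "\<dots> < (cmod x + 1) * (1/(2*(cmod x + 1)))"
      using z by (intro mult_strict_left_mono) (auto intro: add_nonneg_pos)
    also have "\<dots> = 1/2"
    proof -
      have cx: "cmod x + 1 \<noteq> 0" using norm_ge_zero[of x] by linarith
      show ?thesis using cx by simp
    qed
    finally show ?thesis .
  qed
  have xs1: "cmod (x*z) < 1" if "z \<in> ball 0 \<epsilon>'" for z using xsmall[OF that] by simp
  have d0: "1 + x*z \<noteq> 0" if "z \<in> ball 0 \<epsilon>'" for z using one_plus_nz[OF xs1[OF that]] .
  define h where "h = hf c x"
  have hsmall: "h z \<in> ball 0 \<epsilon>" if z: "z \<in> ball 0 \<epsilon>'" for z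
  proof -
    have dz: "1/2 < cmod (1 + x*z)"
    proof -
      have "1 - cmod (x*z) \<le> cmod (1 + x*z)" using norm_diff_ineq[of 1 "x*z"] by simp
      then show ?thesis using xsmall[OF z] by simp
    qed
    have zb: "cmod z < \<epsilon>/(2*\<beta>^2+1)" using z by (simp add: \<epsilon>'_def)
    have "cmod (h z) = \<beta>^2 * cmod z / cmod (1 + x*z)"
      by (simp add: h_def hf_def c_def bc_def norm_mult norm_divide norm_power)
    also have "\<dots> \<le> \<beta>^2 * cmod z / (1/2)"
      using dz by (intro divide_left_mono) auto
    also have "\<dots> = 2 * \<beta>^2 * cmod z" by simp
    also have "\<dots> \<le> 2 * \<beta>^2 * (\<epsilon>/(2*\<beta>^2+1))"
      using zb by (intro mult_left_mono) auto
    also have "\<dots> < \<epsilon>"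
    proof -
      have pd: "0 < 2*\<beta>^2+1" using zero_le_power2[of \<beta>] by linarith
      have "2 * \<beta>^2 * \<epsilon> < (2*\<beta>^2+1) * \<epsilon>" using e0 by (simp add: algebra_simps)
      then have "(2 * \<beta>^2 * \<epsilon>) / (2*\<beta>^2+1) < \<epsilon>" using pd by (simp add: pos_divide_less_eq mult.commute)
      then show ?thesis by simp
    qed
    finally show ?thesis by simp
  qed
  have hnz: "h z \<noteq> 0" if "z \<in> ball 0 \<epsilon>'" "z \<noteq> 0" for z
    using that c0 d0[OF that(1)] by (simp add: h_def hf_def)
  define hl where "hl w = w + 2 * Ln bc - Ln (1 + x * exp w)" for w
  define G where "G z l = Gm x z" for z :: complex and l :: complex
  define Hq where "Hq = Q ** Hi"
  have goal_a: "0 < T \<and> T \<le> T \<and> 0 < \<epsilon>' \<and> 1 < \<rho> \<and> \<rho> \<le> \<rho>" using T0 ep0 r1 by simp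
  have nonpos: "1 + x*z \<notin> \<real>\<^sub>\<le>\<^sub>0" if "z \<in> ball 0 \<epsilon>'" for z
    using re_pos_nonpos[OF small_re[OF xs1[OF that]]] .
  have hholo: "h holomorphic_on ball 0 \<epsilon>'"
    unfolding h_def by (rule holomorphic_on_subset[OF hf_holo]) (use xs1 in auto)
  have goal_b: "change_of_var h \<epsilon>' \<epsilon>"
    unfolding change_of_var_def
  proof (intro conjI hholo)
    show "inj_on h (ball 0 \<epsilon>')"
    proof (rule inj_onI)
      fix z1 z2 assume z1: "z1 \<in> ball 0 \<epsilon>'" and z2: "z2 \<in> ball 0 \<epsilon>'" and e: "h z1 = h z2"
      have "c * z1 * (1 + x*z2) = c * z2 * (1 + x*z1)"
        using e d0[OF z1] d0[OF z2] by (simp add: h_def hf_def field_simps)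
      then have "c * z1 = c * z2" by (simp add: algebra_simps)
      then show "z1 = z2" using c0 by simp
    qed
    show "h ` ball 0 \<epsilon>' \<subseteq> ball 0 \<epsilon>" using hsmall by blast
    show "h 0 = 0" by (simp add: h_def hf_def)
  qed
  have expin: "exp w \<in> ball 0 \<epsilon>'" if "w \<in> logdisk \<epsilon>'" for w
    using logdisk_exp[OF that ep0] by simp
  have hlexp: "exp (hl w) = h (exp w)" if "w \<in> logdisk \<epsilon>'" for w
  proof -
    have u0: "1 + x * exp w \<noteq> 0" using d0[OF expin[OF that]] .
    have "exp (hl w) = exp w * exp (Ln bc) ^ 2 / exp (Ln (1 + x * exp w))"
      by (simp add: hl_def exp_diff exp_add exp_double)
    also have "\<dots> = exp w * bc^2 / (1 + x * exp w)" using u0 bc0 by simp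
    also have "\<dots> = h (exp w)" by (simp add: h_def hf_def c_def mult.commute)
    finally show ?thesis .
  qed
  have hlin: "hl w \<in> logdisk \<epsilon>" if "w \<in> logdisk \<epsilon>'" for w
    using hsmall[OF expin[OF that]] hlexp[OF that] e0 by (simp add: logdisk_iff)
  have goal_c: "is_lift hl h \<epsilon>' \<epsilon>"
    unfolding is_lift_def
  proof (intro conjI ballI)
    show "hl holomorphic_on logdisk \<epsilon>'"
      unfolding hl_def[abs_def]
      by (intro holomorphic_intros) (use nonpos expin in auto)
    show "hl ` logdisk \<epsilon>' \<subseteq> logdisk \<epsilon>" using hlin by blast
    show "exp (hl w) = h (exp w)" if "w \<in> logdisk \<epsilon>'" for w using hlexp[OF that] .
  qed
  have sq0: "csqrt (1 + x*z) \<noteq> 0" if "z \<in> ball 0 \<epsilon>'" for z using d0[OF that] by simp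
  have Gholo: "mholo (\<lambda>z. Gm x z) (ball 0 \<epsilon>')"
    unfolding Gm_def by (intro mholo_mk2 holomorphic_intros) (use nonpos sq0 in auto)
  have goal_d: "is_gauge G \<epsilon>' \<rho>"
    unfolding is_gauge_def G_def
  proof (intro conjI ballI r1 Gholo mholo_const)
    show "det (Gm x z) = 1" if "z \<in> ball 0 \<epsilon>'" for z using sq0[OF that] by (simp add: Gm_def mk2_det)
    show "Gm x z $ 2 $ 1 = 0" for z by (simp add: Gm_def)
  qed
  define kz where "kz z = c/(1+x*z)^2" for z
  have form: "gauge_act (pullback h (\<xi> t)) G z l = Cj (x*z) (msc (kz z) (\<xi> t (h z) l)) + Nm x z"
    if "z \<in> ball 0 \<epsilon>'" for t z l
  proof -
    have G': "G = (\<lambda>z l. Gm x z)" by (simp add: G_def fun_eq_iff)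
    show ?thesis unfolding G' h_def kz_def using gauge_formula[OF xs1[OF that]] .
  qed
  define U where "U = {-T<..<T} \<times> ball (0::complex) \<epsilon>' \<times> annulus \<rho>"
  define V where "V = {-T<..<T} \<times> ball (0::complex) \<epsilon> \<times> annulus \<rho>"
  have oU: "open U" unfolding U_def by (intro open_Times open_greaterThanLessThan open_ball open_annulus)
  have oV: "open V" unfolding V_def by (intro open_Times open_greaterThanLessThan open_ball open_annulus)
  have l0: "l \<noteq> 0" if "l \<in> annulus \<rho>" for l
    using that r1 by (auto simp: annulus_def)
  have C2R: "C2_on (\<lambda>(t, z, l). Rt R c x t z l) U"
  proof (rule C2_Rt[OF RC2[folded V_def] oV oU])
    show "\<forall>p\<in>U. cmod (x * fst (snd p)) < 1" using xs1 by (auto simp: U_def)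
    show "\<forall>p\<in>U. (fst p, hf c x (fst (snd p)), snd (snd p)) \<in> V"
      using hsmall by (auto simp: U_def V_def h_def)
    show "\<forall>p\<in>U. fst p < 1/16" using T16 by (auto simp: U_def)
    show "\<forall>p\<in>U. snd (snd p) \<noteq> 0" using l0 by (auto simp: U_def)
  qed
  have msc0: "msc k 0 = 0" for k by (rule cmat_eqI) simp_all
  have Rt0: "Rt R c x 0 z l = 0" if z: "z \<in> ball 0 \<epsilon>'" and l: "l \<in> annulus \<rho>" for z l
  proof -
    have "R 0 (hf c x z) l = 0" using R0 hsmall[OF z] l by (simp add: h_def)
    then show ?thesis
      unfolding Rt_def using t0_alg[OF d0[OF z], of l] by (simp add: msc0 Cj_zero)
  qed
  have dec: "gauge_act (pullback h (\<xi> t)) G z l = msc (1 / z) (DelA t l) + Rt R c x t z l"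
    if t: "t \<in> {-T<..<T}" and z: "z \<in> ball 0 \<epsilon>' - {0}" and l: "l \<in> annulus \<rho>" for t z l
  proof -
    have zb: "z \<in> ball 0 \<epsilon>'" and zn: "z \<noteq> 0" using z by auto
    have "h z \<in> ball 0 \<epsilon> - {0}" using hsmall[OF zb] hnz[OF zb zn] by simp
    then have xi: "\<xi> t (h z) l = msc (1 / h z) (DelA t l) + R t (h z) l" using Rdec t l by blast
    show ?thesis
      unfolding form[OF zb] unfolding xi unfolding kz_def DelA_pq h_def Rt_def
      by (rule decomp_alg[OF zn d0[OF zb] c0])
  qed
  have goal_e: "pert_delaunay (\<lambda>t. gauge_act (pullback h (\<xi> t)) G) T \<epsilon>' \<rho>"
    unfolding pert_delaunay_def
  proof (intro conjI T0 T16 ep0 r1)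
    show "\<exists>R. C2_on (\<lambda>(t, z, l). R t z l) ({-T<..<T} \<times> ball 0 \<epsilon>' \<times> annulus \<rho>) \<and>
          (\<forall>z\<in>ball 0 \<epsilon>'. \<forall>l\<in>annulus \<rho>. R 0 z l = 0) \<and>
          (\<forall>t\<in>{-T<..<T}. \<forall>z\<in>ball 0 \<epsilon>' - {0}. \<forall>l\<in>annulus \<rho>.
              gauge_act (pullback h (\<xi> t)) G z l = msc (1 / z) (DelA t l) + R t z l)"
      using C2R Rt0 dec unfolding U_def by blast
    show "\<forall>t\<in>{-T<..<T}. DPW_pot (gauge_act (pullback h (\<xi> t)) G) (ball 0 \<epsilon>' - {0}) \<rho>"
    proof
      fix t assume t: "t \<in> {-T<..<T}"
      have D: "DPW_pot (\<xi> t) (ball 0 \<epsilon> - {0}) \<rho>" using DPW t by blast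
      have hz: "\<forall>l\<in>annulus \<rho>. mholo (\<lambda>z. \<xi> t z l) (ball 0 \<epsilon> - {0})"
        and hl': "\<forall>z\<in>ball 0 \<epsilon> - {0}. mholo (\<xi> t z) (annulus \<rho>)"
        and tr: "\<forall>z\<in>ball 0 \<epsilon> - {0}. \<forall>l\<in>annulus \<rho>. \<xi> t z l $ 1 $ 1 + \<xi> t z l $ 2 $ 2 = 0"
        and Fx: "\<forall>z\<in>ball 0 \<epsilon> - {0}. \<exists>F. mholo F (ball 0 \<rho>) \<and> (\<forall>l\<in>annulus \<rho>. F l = msc l (\<xi> t z l)) \<and>
         F 0 $ 1 $ 1 = 0 \<and> F 0 $ 2 $ 1 = 0 \<and> F 0 $ 2 $ 2 = 0"
        using D unfolding DPW_pot_def by blast+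
      define \<Omega> where "\<Omega> = ball (0::complex) \<epsilon>' - {0}"
      have \<Omega>b: "z \<in> ball 0 \<epsilon>'" if "z \<in> \<Omega>" for z using that by (simp add: \<Omega>_def)
      have hmap: "h z \<in> ball 0 \<epsilon> - {0}" if "z \<in> \<Omega>" for z
        using that hsmall hnz by (auto simp: \<Omega>_def)
      have kholo: "kz holomorphic_on \<Omega>"
        unfolding kz_def[abs_def] by (intro holomorphic_intros) (use d0 \<Omega>b in auto)
      have sholo: "(\<lambda>z. x*z) holomorphic_on \<Omega>" by (intro holomorphic_intros)
      have nz: "\<forall>z\<in>\<Omega>. 1 + x*z \<noteq> 0" using d0 \<Omega>b by blast
      show "DPW_pot (gauge_act (pullback h (\<xi> t)) G) (ball 0 \<epsilon>' - {0}) \<rho>"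
        unfolding DPW_pot_def \<Omega>_def[symmetric]
      proof (intro conjI ballI)
        fix l assume l: "l \<in> annulus \<rho>"
        have "mholo (\<lambda>z. Cj (x*z) (msc (kz z) (\<xi> t (h z) l)) + Nm x z) \<Omega>"
        proof (intro mholo_add mholo_Cj mholo_msc kholo sholo nz mholo_Nm)
          show "mholo (\<lambda>z. \<xi> t (h z) l) \<Omega>"
            by (rule mholo_compose[OF hz[rule_format, OF l] holomorphic_on_subset[OF hholo]])
              (use hmap \<Omega>b in auto)
        qed
        then show "mholo (\<lambda>z. gauge_act (pullback h (\<xi> t)) G z l) \<Omega>"
        proof (rule mholo_eq)
          fix z assume "z \<in> \<Omega>"
          then show "Cj (x * z) (msc (kz z) (\<xi> t (h z) l)) + Nm x z = gauge_act (pullback h (\<xi> t)) G z l"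
            using form[OF \<Omega>b[OF \<open>z \<in> \<Omega>\<close>]] by simp
        qed
      next
        fix z assume z: "z \<in> \<Omega>"
        have "mholo (\<lambda>l. Cj (x*z) (msc (kz z) (\<xi> t (h z) l)) + Nm x z) (annulus \<rho>)"
          by (intro mholo_add mholo_Cj mholo_msc mholo_const holomorphic_intros hl'[rule_format, OF hmap[OF z]])
            (use nz z in auto)
        then show "mholo (gauge_act (pullback h (\<xi> t)) G z) (annulus \<rho>)"
        proof (rule mholo_eq)
          fix l assume "l \<in> annulus \<rho>"
          show "Cj (x * z) (msc (kz z) (\<xi> t (h z) l)) + Nm x z = gauge_act (pullback h (\<xi> t)) G z l"
            using form[OF \<Omega>b[OF z]] by simp
        qed
      next
        fix z l assume z: "z \<in> \<Omega>" and l: "l \<in> annulus \<rho>"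
        have "\<xi> t (h z) l $ 1 $ 1 + \<xi> t (h z) l $ 2 $ 2 = 0" using tr hmap[OF z] l by blast
        then have "kz z * \<xi> t (h z) l $ 1 $ 1 + kz z * \<xi> t (h z) l $ 2 $ 2 = 0"
          by (simp flip: distrib_left)
        then show "gauge_act (pullback h (\<xi> t)) G z l $ 1 $ 1 + gauge_act (pullback h (\<xi> t)) G z l $ 2 $ 2 = 0"
          unfolding form[OF \<Omega>b[OF z]]
          using Cj_trace[of "x*z" "msc (kz z) (\<xi> t (h z) l)"] Nm_trace[of x z]
          by (simp add: algebra_simps)
      next
        fix z assume z: "z \<in> \<Omega>"
        obtain F where Fh: "mholo F (ball 0 \<rho>)" and Fa: "\<forall>l\<in>annulus \<rho>. F l = msc l (\<xi> t (h z) l)"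
          and F0: "F 0 $ 1 $ 1 = 0" "F 0 $ 2 $ 1 = 0" "F 0 $ 2 $ 2 = 0"
          using Fx hmap[OF z] by blast
        define F' where "F' l = Cj (x*z) (msc (kz z) (F l)) + msc l (Nm x z)" for l
        show "\<exists>F. mholo F (ball 0 \<rho>) \<and>
             (\<forall>l\<in>annulus \<rho>. F l = msc l (gauge_act (pullback h (\<xi> t)) G z l)) \<and>
             F 0 $ 1 $ 1 = 0 \<and> F 0 $ 2 $ 1 = 0 \<and> F 0 $ 2 $ 2 = 0"
        proof (intro exI[of _ F'] conjI ballI)
          show "mholo F' (ball 0 \<rho>)"
            unfolding F'_def[abs_def]
            by (intro mholo_add mholo_Cj mholo_msc mholo_const holomorphic_intros Fh) (use nz z in auto)
          show "F' l = msc l (gauge_act (pullback h (\<xi> t)) G z l)" if "l \<in> annulus \<rho>" for l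
            unfolding form[OF \<Omega>b[OF z]] F'_def Fa[rule_format, OF that]
            by (simp add: msc_add_right msc_Cj msc_comm)
          show "F' 0 $ 1 $ 1 = 0" "F' 0 $ 2 $ 1 = 0" "F' 0 $ 2 $ 2 = 0"
            unfolding F'_def using Cj_F0[OF F0, of "x*z" "kz z"] by simp_all
        qed
      qed
    qed
  qed
  have C0X: "C0 = Q ** B ** Hi"
  proof -
    have "C0 = C0 ** (Hmat ** Hi)" by (simp add: Hmat_Hi)
    also have "\<dots> = X ** Hi" by (simp add: X_def matrix_mul_assoc)
    finally show ?thesis using XQB by simp
  qed
  have valeq: "Hq ** Ef w = \<Phi> 0 (hl w) l ** G (exp w) l" if w: "w \<in> logdisk \<epsilon>'" and l: "l \<in> annulus \<rho>" for w l
  proof -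
    define e where "e = exp (w/2)"
    define u where "u = 1 + x * exp w"
    define a where "a = csqrt u"
    have u0: "u \<noteq> 0" using d0[OF expin[OF w]] by (simp add: u_def)
    have a0: "a \<noteq> 0" using u0 by (simp add: a_def)
    have e0': "e \<noteq> 0" by (simp add: e_def)
    have e2: "e^2 = exp w" by (simp add: e_def flip: exp_double)
    have a2: "a^2 = 1 - \<gamma>*bc*e^2" by (simp add: a_def u_def e2 x_def)
    have ehl: "exp (hl w / 2) = bc * e / a"
    proof -
      have eq: "hl w / 2 = w/2 + Ln bc - Ln u / 2" by (simp add: hl_def u_def field_simps)
      have "exp (hl w / 2) = exp (w/2 + Ln bc - Ln u / 2)" by (simp only: eq)
      also have "\<dots> = e * exp (Ln bc) / exp (Ln u / 2)" by (simp only: exp_diff exp_add e_def)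
      finally have "exp (hl w / 2) = e * exp (Ln bc) / exp (Ln u / 2)" .
      also have "\<dots> = e * bc / a" using bc0 u0 by (simp add: a_def csqrt_exp_Ln)
      finally show ?thesis by (simp add: mult.commute)
    qed
    have Phi: "\<Phi> 0 (hl w) l = C0 ** Ef (hl w)"
      using \<Psi> l hlin[OF w] \<Psi>f[OF l] by metis
    have Gx: "G (exp w) l = mk2 a (a - 1/a) 0 (1/a)" by (simp add: G_def Gm_def a_def u_def)
    have "\<Phi> 0 (hl w) l ** G (exp w) l = Q ** (mk2 bc \<gamma> 0 (1/bc) ** Hi ** Em (bc*e/a) ** mk2 a (a - 1/a) 0 (1/a))"
      unfolding Phi Gx C0X Ef_def ehl Bf bc_def by (simp add: matrix_mul_assoc)
    also have "\<dots> = Q ** (Hi ** Em e)" by (simp add: value_alg[OF bc0 e0' a0 a2])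
    also have "\<dots> = Hq ** Ef w" by (simp add: Hq_def Ef_def e_def matrix_mul_assoc)
    finally show ?thesis by simp
  qed
  have goal_f: "value_at_one (\<lambda>w l. \<Phi> 0 (hl w) l ** G (exp w) l) (logdisk \<epsilon>') \<rho> (\<lambda>_. Hq)"
    unfolding value_at_one_def
  proof (intro exI[of _ "\<lambda>w l. Hq ** Ef w"] ballI conjI allI)
    fix l w assume l: "l \<in> annulus \<rho>"
    have "mhas_deriv (\<lambda>w. Hq ** Ef w) (0 ** Ef w + Hq ** (Ef w ** A0)) w"
      by (rule mhas_deriv_mult[OF mhas_deriv_const Ef_deriv])
    then show "mhas_deriv (\<lambda>w. Hq ** Ef w) (Hq ** Ef w ** DelA 0 l) w"
      by (simp add: DelA0 matrix_mul_assoc)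
  next
    fix l w assume "l \<in> annulus \<rho>" "w \<in> logdisk \<epsilon>'"
    then show "Hq ** Ef w = \<Phi> 0 (hl w) l ** G (exp w) l" using valeq by blast
  next
    fix l show "Hq ** Ef 0 = Hq" by (simp add: Ef_0)
  qed
  have goal_g: "Hq \<in> SU2" unfolding Hq_def by (rule SU2_mult[OF QSU Hi_SU2])
  have HqE: "Uni_const (C0 ** Hmat) ** matrix_inv Hmat = Hq"
    by (simp add: Hq_def Q_def X_def Hmat_inv)
  show ?thesis
    unfolding HqE using goal_a goal_b goal_c goal_d goal_e goal_f goal_g by blast
qed

end
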